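(* In the setting described in the context (with the non-degeneracy condition: for every $i\neq i'$ there exists $n$ with $\Lambda_{ni}\neq\Lambda_{ni'}$), there exists an exact joint triangularizer $U_\circ$ of $\{M_n\}$ such that an approximate joint triangularizer $U$ of $\{\hat M_n\}$ can be written as $U=U_\circ e^{\alpha X}$ with $X=-X^T$, $\|X\|=1$, $\alpha>0$, and $$\alpha\le\frac{2\sigma\sqrt{d(d-1)}\,\kappa(V)^4}{\gamma}\sqrt{\sum_{n=1}^N\|M_n\|^2}\sqrt{\sum_{n=1}^N\|W_n\|^2}+O((\alpha+\sigma)^2),\qquad \gamma=\min_{i<i'}\sum_{n=1}^N(\Lambda_{ni}-\Lambda_{ni'})^2 .$$
   Context: All matrices are real; $\|\cdot\|$ is the Frobenius norm; $\kappa(V)=\sigma_{\max}(V)/\sigma_{\min}(V)$ is the condition number. ${\rm low}(A)$ is the strictly lower-triangular part of $A$. Model: $\hat M_n=M_n+\sigma W_n$, $M_n=V\,{\rm diag}(\Lambda_{n1},\dots,\Lambda_{nd})V^{-1}$, $n=1,\dots,N$, with $V$ real invertible, $\Lambda_{ni}$ real, $\sigma>0$, $W_n$ real with $\|W_n\|\le1$. An exact joint triangularizer of $\{M_n\}$ is an orthogonal $U_\circ$ with ${\rm low}(U_\circ^TM_nU_\circ)=0$ for all $n$. An approximate joint triangularizer of $\{\hat M_n\}$ is a solution (stationary point) of $\min_{U\in\mathbb O(d)}\sum_n\|{\rm low}(U^T\hat M_nU)\|^2$. The inequality is first-order, valid up to $O((\alpha+\sigma)^2)$ terms. *)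

theory Defs
  imports "HOL-Analysis.Analysis"
begin

text \<open>Matrices are real d x d matrices of type real^'d^'d; the norm on this type is the
  Euclidean norm of all entries, i.e. the Frobenius norm. The index type is linearly
  ordered so that "strictly lower triangular" makes sense.\<close>

primrec mat_pow :: "((real,'d::{finite,linorder}) vec,'d) vec \<Rightarrow> nat \<Rightarrow> ((real,'d) vec,'d) vec" where
  "mat_pow A 0 = mat 1"
| "mat_pow A (Suc k) = A ** mat_pow A k"

definition mat_exp :: "((real,'d::{finite,linorder}) vec,'d) vec \<Rightarrow> ((real,'d) vec,'d) vec" where
  "mat_exp A = (\<Sum>k. (1 / fact k) *\<^sub>R mat_pow A k)"

definition mdiag :: "('d::{finite,linorder} \<Rightarrow> real) \<Rightarrow> ((real,'d) vec,'d) vec" where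
  "mdiag v = (\<chi> i j. if i = j then v i else 0)"

definition low :: "((real,'d::{finite,linorder}) vec,'d) vec \<Rightarrow> ((real,'d) vec,'d) vec" where
  "low A = (\<chi> i j. if j < i then A $ i $ j else 0)"

definition sigma_max :: "((real,'d::{finite,linorder}) vec,'d) vec \<Rightarrow> real" where
  "sigma_max A = (SUP x\<in>{x::(real,'d) vec. norm x = 1}. norm (A *v x))"

definition sigma_min :: "((real,'d::{finite,linorder}) vec,'d) vec \<Rightarrow> real" where
  "sigma_min A = (INF x\<in>{x::(real,'d) vec. norm x = 1}. norm (A *v x))"

definition cond_num :: "((real,'d::{finite,linorder}) vec,'d) vec \<Rightarrow> real" where
  "cond_num A = sigma_max A / sigma_min A"

definition jt_obj :: "nat \<Rightarrow> (nat \<Rightarrow> ((real,'d::{finite,linorder}) vec,'d) vec) \<Rightarrow> ((real,'d) vec,'d) vec \<Rightarrow> real" where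
  "jt_obj N Ms U = (\<Sum>n\<in>{1..N}. (norm (low (transpose U ** Ms n ** U)))\<^sup>2)"

definition exact_jt :: "nat \<Rightarrow> (nat \<Rightarrow> ((real,'d::{finite,linorder}) vec,'d) vec) \<Rightarrow> ((real,'d) vec,'d) vec \<Rightarrow> bool" where
  "exact_jt N Ms U \<longleftrightarrow> orthogonal_matrix U \<and> (\<forall>n\<in>{1..N}. low (transpose U ** Ms n ** U) = 0)"

text \<open>Approximate joint triangularizer: a stationary point of the objective on the
  orthogonal group, i.e. every geodesic curve t \<mapsto> U e^{tX} (X skew) through U has zero
  derivative of the objective at t = 0.\<close>
definition approx_jt :: "nat \<Rightarrow> (nat \<Rightarrow> ((real,'d::{finite,linorder}) vec,'d) vec) \<Rightarrow> ((real,'d) vec,'d) vec \<Rightarrow> bool" where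
  "approx_jt N Ms U \<longleftrightarrow> orthogonal_matrix U \<and>
     (\<forall>X::((real,'d) vec,'d) vec. transpose X = - X \<longrightarrow>
        ((\<lambda>t. jt_obj N Ms (U ** mat_exp (t *\<^sub>R X))) has_real_derivative 0) (at 0))"

end

theory Submission
  imports Defs
begin


type_synonym 'd mt = "((real,'d) vec,'d) vec"

lemma inner_mat: "inner (A::real^'n^'m) B = (\<Sum>i\<in>UNIV. \<Sum>j\<in>UNIV. A$i$j * B$i$j)"
  by (simp add: inner_vec_def inner_real_def)

lemma frob_sq: "(norm (A::real^'n^'m))\<^sup>2 = (\<Sum>i\<in>UNIV. \<Sum>j\<in>UNIV. (A$i$j)\<^sup>2)"
  unfolding power2_norm_eq_inner inner_mat by (simp add: power2_eq_square)

lemma norm_transpose: "norm (transpose (A::real^'n^'n)) = norm A"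
proof -
  have "(norm (transpose A))\<^sup>2 = (norm A)\<^sup>2"
    unfolding frob_sq transpose_def by simp (rule sum.swap)
  then show ?thesis by (simp add: power2_eq_iff_nonneg)
qed

lemma frob_col: "(norm (A::real^'n^'m))\<^sup>2 = (\<Sum>j\<in>UNIV. (norm (column j A))\<^sup>2)"
  unfolding frob_sq power2_norm_eq_inner by (simp add: inner_vec_def column_def power2_eq_square) (rule sum.swap)

lemma column_mult: "column j (A ** B) = A *v column j B"
  by (simp add: column_def matrix_matrix_mult_def matrix_vector_mult_def vec_eq_iff)

lemma mult_bound_left:
  fixes A :: "real^'n^'n" and B :: "real^'n^'n"
  assumes "\<And>x. norm (A *v x) \<le> c * norm x" "c \<ge> 0"
  shows "norm (A ** B) \<le> c * norm B"
proof -
  have "(norm (A ** B))\<^sup>2 \<le> (c * norm B)\<^sup>2"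
  proof -
    have "(norm (A ** B))\<^sup>2 = (\<Sum>j\<in>UNIV. (norm (A *v column j B))\<^sup>2)"
      by (simp add: frob_col column_mult)
    also have "\<dots> \<le> (\<Sum>j\<in>UNIV. c\<^sup>2 * (norm (column j B))\<^sup>2)"
    proof (intro sum_mono)
      fix j
      have "(norm (A *v column j B))\<^sup>2 \<le> (c * norm (column j B))\<^sup>2"
        by (rule power_mono[OF assms(1)]) simp
      then show "(norm (A *v column j B))\<^sup>2 \<le> c\<^sup>2 * (norm (column j B))\<^sup>2"
        by (simp add: power_mult_distrib)
    qed
    also have "\<dots> = (c * norm B)\<^sup>2"
      by (simp add: frob_col[of B] sum_distrib_left power_mult_distrib)
    finally show ?thesis .
  qed
  then show ?thesis using assms(2) by (simp add: power2_le_iff_abs_le)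
qed

lemma transpose_bound:
  fixes A :: "real^'n^'n"
  assumes "\<And>x. norm (A *v x) \<le> c * norm x"
  shows "norm (transpose A *v x) \<le> c * norm x"
proof -
  let ?y = "transpose A *v x"
  have "(norm ?y)\<^sup>2 = inner (A *v ?y) x"
    by (simp add: power2_norm_eq_inner dot_lmul_matrix[symmetric] inner_commute)
  also have "\<dots> \<le> norm (A *v ?y) * norm x" by (rule norm_cauchy_schwarz)
  also have "\<dots> \<le> c * norm ?y * norm x" by (simp add: assms mult_right_mono)
  finally have *: "(norm ?y)\<^sup>2 \<le> c * norm ?y * norm x" .
  show ?thesis
  proof (cases "norm ?y = 0")
    case True
    have "0 \<le> c * norm x"
    proof -
      have "norm (A *v axis undefined 1) \<le> c" using assms[of "axis undefined 1"] by simp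
      then have "c \<ge> 0" by (meson norm_ge_zero order_trans)
      then show ?thesis by simp
    qed
    then show ?thesis using True by simp
  next
    case False
    then have "norm ?y > 0" by simp
    with * show ?thesis by (simp add: power2_eq_square mult.commute mult.left_commute)
  qed
qed

lemma mult_bound_right:
  fixes A :: "real^'n^'n" and B :: "real^'n^'n"
  assumes "\<And>x. norm (A *v x) \<le> c * norm x" "c \<ge> 0"
  shows "norm (B ** A) \<le> c * norm B"
proof -
  have "norm (B ** A) = norm (transpose A ** transpose B)"
    by (metis matrix_transpose_mul norm_transpose)
  also have "\<dots> \<le> c * norm (transpose B)"
    by (rule mult_bound_left) (use transpose_bound[OF assms(1)] assms(2) in auto)
  finally show ?thesis by (simp add: norm_transpose)
qed

lemma mv_bound: "norm ((A::real^'n^'m) *v x) \<le> norm A * norm x"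
proof -
  have "(norm (A *v x))\<^sup>2 \<le> (norm A * norm x)\<^sup>2"
  proof -
    have "(norm (A *v x))\<^sup>2 = (\<Sum>i\<in>UNIV. (inner (A$i) x)\<^sup>2)"
      unfolding power2_norm_eq_inner by (simp add: inner_vec_def matrix_vector_mul_component power2_eq_square)
    also have "\<dots> \<le> (\<Sum>i\<in>UNIV. (norm (A$i))\<^sup>2 * (norm x)\<^sup>2)"
    proof (intro sum_mono)
      fix i
      have h: "\<bar>inner (A$i) x\<bar> \<le> norm (A$i) * norm x" by (rule Cauchy_Schwarz_ineq2)
      have "(inner (A$i) x)\<^sup>2 \<le> (norm (A$i) * norm x)\<^sup>2"
        using power_mono[OF h abs_ge_zero, of 2] by simp
      then show "(inner (A$i) x)\<^sup>2 \<le> (norm (A$i))\<^sup>2 * (norm x)\<^sup>2"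
        by (simp add: power_mult_distrib)
    qed
    also have "\<dots> = (norm A * norm x)\<^sup>2"
    proof -
      have "(norm A)\<^sup>2 = (\<Sum>i\<in>UNIV. (norm (A$i))\<^sup>2)"
        unfolding power2_norm_eq_inner by (simp add: inner_vec_def)
      then show ?thesis by (simp add: sum_distrib_right power_mult_distrib)
    qed
    finally show ?thesis .
  qed
  then show ?thesis by (simp add: power2_le_iff_abs_le)
qed

lemma norm_mult_le: "norm ((A::real^'n^'n) ** (B::real^'n^'n)) \<le> norm A * norm B"
  by (rule mult_bound_left) (auto simp: mv_bound)

lemma orth_norm: "orthogonal_matrix (Q::real^'n^'n) \<Longrightarrow> norm (Q *v x) = norm x"
proof -
  assume "orthogonal_matrix Q"
  then have "orthogonal_transformation (\<lambda>x. Q *v x)"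
    by (simp add: orthogonal_transformation_matrix)
  then show ?thesis by (simp add: orthogonal_transformation)
qed

lemma orth_conj_le:
  assumes "orthogonal_matrix (Q::real^'n^'n)"
  shows "norm (transpose Q ** A ** Q) \<le> norm A"
proof -
  have a: "\<And>x. norm (transpose Q *v x) \<le> 1 * norm x" "\<And>x. norm (Q *v x) \<le> 1 * norm x"
    using assms orth_norm[of Q] orth_norm[of "transpose Q"] orthogonal_matrix_transpose[of Q] by (simp_all del: transpose_matrix_vector)
  have "norm (transpose Q ** A ** Q) \<le> 1 * norm (transpose Q ** A)"
    by (rule mult_bound_right[OF a(2)]) simp
  also have "\<dots> \<le> 1 * norm A" using mult_bound_left[OF a(1)] by simp
  finally show ?thesis by simp
qed



lemma low_nth[simp]: "low A $ i $ j = (if j < i then A$i$j else 0)"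
  by (simp add: low_def)

lemma low_add: "low (A + B) = low A + low B" by (simp add: vec_eq_iff)
lemma low_diff: "low (A - B) = low A - low B" by (simp add: vec_eq_iff)
lemma low_scaleR: "low (c *\<^sub>R A) = c *\<^sub>R low A" by (simp add: vec_eq_iff)
lemma low_uminus: "low (- A) = - low A" by (simp add: vec_eq_iff)
lemma low_low: "low (low A) = low A" by (simp add: vec_eq_iff)
lemma low_zero: "low 0 = 0" by (simp add: vec_eq_iff)
lemma low_eq0_iff: "low A = 0 \<longleftrightarrow> (\<forall>i j. j < i \<longrightarrow> A$i$j = 0)"
  by (auto simp: vec_eq_iff)

lemma norm_low_sq: "(norm (low A))\<^sup>2 = (\<Sum>i\<in>UNIV. \<Sum>j\<in>UNIV. (if j < i then (A$i$j)\<^sup>2 else 0))"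
  unfolding frob_sq by (intro sum.cong refl) auto

lemma norm_low_le: "norm (low A) \<le> norm A"
proof -
  have "(norm (low A))\<^sup>2 \<le> (norm A)\<^sup>2"
    unfolding norm_low_sq frob_sq by (intro sum_mono) auto
  then show ?thesis by (simp add: power2_le_iff_abs_le)
qed

lemma upper_mult:
  assumes "low A = 0" "low B = 0"
  shows "low (A ** B) = 0"
proof -
  have "(A ** B)$i$j = 0" if "j < i" for i j
  proof -
    have z: "A$i$k * B$k$j = 0" for k
    proof (cases "k < i")
      case True then show ?thesis using assms(1) unfolding low_eq0_iff by simp
    next
      case False then have "j < k" using that by simp
      then show ?thesis using assms(2) unfolding low_eq0_iff by simp
    qed
    have "(A ** B)$i$j = (\<Sum>k\<in>UNIV. A$i$k * B$k$j)" by (simp add: matrix_matrix_mult_def)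
    also have "\<dots> = 0" by (rule sum.neutral) (use z in blast)
    finally show ?thesis .
  qed
  then show ?thesis by (simp add: low_eq0_iff)
qed

lemma low_sub_low: "low (A - low A) = 0"
  by (simp add: vec_eq_iff)

lemma mm_diff_left: "(A::real^'n^'n) ** (B - C) = A ** B - A ** C"
  by (simp add: vec_eq_iff matrix_matrix_mult_def sum_subtractf algebra_simps)
lemma mm_diff_right: "((B::real^'n^'n) - C) ** A = B ** A - C ** A"
  by (simp add: vec_eq_iff matrix_matrix_mult_def sum_subtractf algebra_simps)
lemma mm_add_left: "(A::real^'n^'n) ** (B + C) = A ** B + A ** C"
  by (simp add: vec_eq_iff matrix_matrix_mult_def sum.distrib algebra_simps)
lemma mm_add_right: "((B::real^'n^'n) + C) ** A = B ** A + C ** A"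
  by (simp add: vec_eq_iff matrix_matrix_mult_def sum.distrib algebra_simps)
lemma mm_scale_left: "(c *\<^sub>R (A::real^'n^'n)) ** B = c *\<^sub>R (A ** B)"
  by (simp add: vec_eq_iff matrix_matrix_mult_def sum_distrib_left algebra_simps)
lemma mm_scale_right: "(A::real^'n^'n) ** (c *\<^sub>R B) = c *\<^sub>R (A ** B)"
  by (simp add: vec_eq_iff matrix_matrix_mult_def sum_distrib_left algebra_simps)
lemma mm_uminus_left: "(- (A::real^'n^'n)) ** B = - (A ** B)"
  by (simp add: vec_eq_iff matrix_matrix_mult_def sum_negf)
lemma mm_uminus_right: "(A::real^'n^'n) ** (- B) = - (A ** B)"
  by (simp add: vec_eq_iff matrix_matrix_mult_def sum_negf)

lemmas mm_simps = mm_diff_left mm_diff_right mm_add_left mm_add_right mm_scale_left mm_scale_right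
  mm_uminus_left mm_uminus_right

lemma transpose_add: "transpose ((A::real^'n^'n) + B) = transpose A + transpose B"
  by (simp add: vec_eq_iff transpose_def)
lemma transpose_diff: "transpose ((A::real^'n^'n) - B) = transpose A - transpose B"
  by (simp add: vec_eq_iff transpose_def)
lemma transpose_uminus: "transpose (- (A::real^'n^'n)) = - transpose A"
  by (simp add: vec_eq_iff transpose_def)
lemma transpose_mat1: "transpose (mat 1 :: real^'n^'n) = mat 1" by simp

lemma mdiag_left: "(mdiag d ** Z) $ i $ j = d i * Z$i$j"
proof -
  have "(mdiag d ** Z) $ i $ j = (\<Sum>k\<in>UNIV. (if i = k then d i else 0) * Z$k$j)"
    by (simp add: matrix_matrix_mult_def mdiag_def)
  also have "\<dots> = (\<Sum>k\<in>UNIV. if k = i then d i * Z$i$j else 0)"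
    by (rule sum.cong) auto
  also have "\<dots> = d i * Z$i$j" by simp
  finally show ?thesis .
qed

lemma mdiag_right: "(Z ** mdiag d) $ i $ j = Z$i$j * d j"
proof -
  have "(Z ** mdiag d) $ i $ j = (\<Sum>k\<in>UNIV. Z$i$k * (if k = j then d k else 0))"
    by (simp add: matrix_matrix_mult_def mdiag_def)
  also have "\<dots> = (\<Sum>k\<in>UNIV. if k = j then Z$i$j * d j else 0)"
    by (rule sum.cong) auto
  also have "\<dots> = Z$i$j * d j" by simp
  finally show ?thesis .
qed

lemma skew_low:
  fixes X :: "((real,'n::{finite,linorder}) vec, 'n) vec"
  assumes "transpose X = - X"
  shows "(norm X)\<^sup>2 = 2 * (norm (low X))\<^sup>2"
proof -
  have sk: "X$j$i = - X$i$j" for i j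
  proof -
    have "(transpose X)$i$j = (-X)$i$j" using assms by simp
    then show ?thesis by (simp add: transpose_def)
  qed
  have d0: "X$i$i = 0" for i using sk[of i i] by simp
  have "(norm X)\<^sup>2 = (\<Sum>i\<in>UNIV. \<Sum>j\<in>UNIV. (if j < i then (X$i$j)\<^sup>2 else 0) + (if i < j then (X$i$j)\<^sup>2 else 0))"
    unfolding frob_sq by (intro sum.cong refl) (auto simp: d0 not_less_iff_gr_or_eq)
  also have "\<dots> = (norm (low X))\<^sup>2 + (\<Sum>i\<in>UNIV. \<Sum>j\<in>UNIV. (if i < j then (X$i$j)\<^sup>2 else 0))"
    by (simp add: sum.distrib norm_low_sq)
  also have "(\<Sum>i\<in>UNIV. \<Sum>j\<in>UNIV. (if i < j then (X$i$j)\<^sup>2 else 0)) = (\<Sum>j\<in>UNIV. \<Sum>i\<in>UNIV. (if i < j then (X$i$j)\<^sup>2 else 0))"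
    by (rule sum.swap)
  also have "\<dots> = (\<Sum>j\<in>UNIV. \<Sum>i\<in>UNIV. (if i < j then (X$j$i)\<^sup>2 else 0))"
  proof (intro sum.cong refl)
    fix i j
    have "(X$j$i)\<^sup>2 = (X$i$j)\<^sup>2" using sk[of i j] by simp
    then show "(if i < j then (X$i$j)\<^sup>2 else 0) = (if i < j then (X$j$i)\<^sup>2 else 0)" by simp
  qed
  also have "\<dots> = (norm (low X))\<^sup>2" by (simp add: norm_low_sq)
  finally show ?thesis by simp
qed

section \<open>matrix exponential\<close>

lemma mat_pow_bound: "norm (mat_pow Y (Suc k)) \<le> norm Y ^ Suc k"
proof (induction k)
  case 0 then show ?case by simp
next
  case (Suc k)
  have "norm (mat_pow Y (Suc (Suc k))) = norm (Y ** mat_pow Y (Suc k))"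
    by (simp only: mat_pow.simps(2))
  also have "\<dots> \<le> norm Y * norm (mat_pow Y (Suc k))" by (rule norm_mult_le)
  also have "\<dots> \<le> norm Y * norm Y ^ Suc k" using Suc by (simp add: mult_left_mono)
  finally show ?case by simp
qed

lemma fact_ge_pow2: "(2::real) ^ (n+1) \<le> fact (n+2)"
proof (induction n)
  case 0 then show ?case by simp
next
  case (Suc n)
  have "(2::real) ^ (Suc n + 1) = 2 * 2^(n+1)" by simp
  also have "\<dots> \<le> (of_nat (n+3)) * fact (n+2)" using Suc by (intro mult_mono) auto
  also have "\<dots> = fact (Suc n + 2)" by (simp add: fact_Suc algebra_simps)
  finally show ?case .
qed

lemma mat_exp_bound:
  fixes Y :: "'d::{finite,linorder} mt"
  assumes "norm Y \<le> 1"
  shows "norm (mat_exp Y - mat 1 - Y) \<le> (norm Y)\<^sup>2"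
proof -
  define f where "f k = (1 / fact k) *\<^sub>R mat_pow Y k" for k
  define g where "g n = (norm Y)\<^sup>2 * ((1/2) * (1/2)^n)" for n :: nat
  have fb: "norm (f (n+2)) \<le> g n" for n
  proof -
    have "norm (f (n+2)) = norm (mat_pow Y (Suc (Suc n))) / fact (n+2)"
      by (simp add: f_def)
    also have "\<dots> \<le> norm Y ^ (n+2) / fact (n+2)"
      using mat_pow_bound[of Y "Suc n"] by (intro divide_right_mono) auto
    also have "\<dots> \<le> (norm Y)\<^sup>2 / 2^(n+1)"
    proof (intro frac_le)
      show "norm Y ^ (n + 2) \<le> (norm Y)\<^sup>2"
        by (rule power_decreasing) (use assms in auto)
    qed (use fact_ge_pow2[of n] in auto)
    also have "\<dots> = g n" by (simp add: g_def power_one_over field_simps)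
    finally show ?thesis .
  qed
  have gs: "g sums ((norm Y)\<^sup>2 * 1)"
    unfolding g_def by (intro sums_mult) (use geometric_sums[of "1/2::real"] sums_mult[of _ _ "1/2"] in force)
  have sn: "summable (\<lambda>n. norm (f (n+2)))"
    by (rule summable_comparison_test[OF _ sums_summable[OF gs]]) (use fb in auto)
  have sf: "summable f"
    using summable_iff_shift[of f 2] summable_norm_cancel[OF sn] by simp
  have "mat_exp Y = (\<Sum>n. f (n + 2)) + sum f {..<2}"
    unfolding mat_exp_def f_def[symmetric] by (rule suminf_split_initial_segment[OF sf])
  moreover have "sum f {..<2} = mat 1 + Y"
    by (simp add: f_def numeral_2_eq_2)
  ultimately have "mat_exp Y - mat 1 - Y = (\<Sum>n. f (n + 2))" by simp
  then have "norm (mat_exp Y - mat 1 - Y) \<le> (\<Sum>n. norm (f (n + 2)))"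
    using summable_norm[OF sn] by simp
  also have "\<dots> \<le> (\<Sum>n. g n)"
    by (rule suminf_le) (use fb sn sums_summable[OF gs] in auto)
  also have "\<dots> = (norm Y)\<^sup>2" using gs sums_unique by fastforce
  finally show ?thesis .
qed

lemma mat_exp_0: "mat_exp (0::'d::{finite,linorder} mt) = mat 1"
  using mat_exp_bound[of "0::'d mt"] by simp



lemma entry_formula:
  "(transpose A ** B ** C) $ i $ j = inner (column i (A::real^'n^'n)) ((B::real^'n^'n) *v column j (C::real^'n^'n))"
  apply (simp add: matrix_matrix_mult_def matrix_vector_mult_def inner_vec_def column_def transpose_def
      sum_distrib_left sum_distrib_right mult.assoc)
  apply (rule sum.swap)
  done

lemma inv_props:
  assumes "invertible (A::real^'n^'n)"
  shows "A ** matrix_inv A = mat 1" "matrix_inv A ** A = mat 1"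
proof -
  have "\<exists>A'. A ** A' = mat 1 \<and> A' ** A = mat 1" using assms by (simp add: invertible_def)
  then have "A ** matrix_inv A = mat 1 \<and> matrix_inv A ** A = mat 1"
    unfolding matrix_inv_def by (rule someI_ex)
  then show "A ** matrix_inv A = mat 1" "matrix_inv A ** A = mat 1" by auto
qed

lemma mdiag_vec: "mdiag d *v x = (\<chi> i. d i * x$i)"
proof -
  have "(mdiag d *v x)$i = d i * x$i" for i
  proof -
    have "(mdiag d *v x)$i = (\<Sum>k\<in>UNIV. (if i = k then d i else 0) * x$k)"
      by (simp add: matrix_vector_mult_def mdiag_def)
    also have "\<dots> = (\<Sum>k\<in>UNIV. if k = i then d i * x$i else 0)"
      by (rule sum.cong) auto
    also have "\<dots> = d i * x$i" by simp
    finally show ?thesis .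
  qed
  then show ?thesis by (simp add: vec_eq_iff)
qed

lemma eig_col:
  fixes V :: "'d::{finite,linorder} mt"
  assumes "invertible V"
  shows "(V ** mdiag d ** matrix_inv V) *v column j V = d j *\<^sub>R column j V"
proof -
  have "(V ** mdiag d ** matrix_inv V) *v column j V = (V ** mdiag d ** matrix_inv V ** V) *v axis j 1"
    by (simp add: matrix_vector_mult_basis[symmetric] matrix_vector_mul_assoc)
  also have "V ** mdiag d ** matrix_inv V ** V = V ** mdiag d"
    using inv_props[OF assms] by (metis matrix_mul_assoc matrix_mul_rid)
  also have "(V ** mdiag d) *v axis j 1 = V *v (mdiag d *v axis j 1)"
    by (simp add: matrix_vector_mul_assoc)
  also have "mdiag d *v axis j 1 = d j *\<^sub>R axis j 1"
    by (auto simp: mdiag_vec vec_eq_iff axis_def)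
  also have "V *v (d j *\<^sub>R axis j 1) = d j *\<^sub>R column j V"
    by (simp add: matrix_vector_mult_scaleR matrix_vector_mult_basis)
  finally show ?thesis .
qed

lemma col_nonzero:
  assumes "invertible (V::real^'n^'n)"
  shows "column j V \<noteq> 0"
proof
  assume "column j V = 0"
  then have h: "V *v axis j 1 = V *v 0" by (simp add: matrix_vector_mult_basis)
  have "axis j (1::real) = 0" using injD[OF inj_matrix_vector_mult[OF assms] h] .
  then show False by simp
qed

lemma span_image_repr:
  fixes f :: "'a \<Rightarrow> 'b::real_vector"
  assumes "x \<in> span (f ` A)" "finite A"
  shows "\<exists>c. x = (\<Sum>a\<in>A. c a *\<^sub>R f a)"
  using assms(1)
proof (induction rule: span_induct_alt)
  case base
  show ?case by (rule exI[of _ "\<lambda>_. 0"]) simp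
next
  case (step c0 x y)
  then obtain a0 where a0: "a0 \<in> A" "x = f a0" by auto
  from step obtain c where c: "y = (\<Sum>a\<in>A. c a *\<^sub>R f a)" by auto
  have "c0 *\<^sub>R x + y = (\<Sum>a\<in>A. (c a + (if a = a0 then c0 else 0)) *\<^sub>R f a)"
  proof -
    have "(\<Sum>a\<in>A. (c a + (if a = a0 then c0 else 0)) *\<^sub>R f a)
        = (\<Sum>a\<in>A. c a *\<^sub>R f a + (if a = a0 then c0 *\<^sub>R f a0 else 0))"
      by (intro sum.cong refl) (auto simp: scaleR_add_left)
    also have "\<dots> = (\<Sum>a\<in>A. c a *\<^sub>R f a) + (\<Sum>a\<in>A. (if a = a0 then c0 *\<^sub>R f a0 else 0))"
      by (rule sum.distrib)
    also have "(\<Sum>a\<in>A. (if a = a0 then c0 *\<^sub>R f a0 else 0)) = c0 *\<^sub>R f a0"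
      using a0(1) assms(2) by simp
    finally show ?thesis using a0 c by simp
  qed
  then show ?case by (rule exI[where x="\<lambda>a. c a + (if a = a0 then c0 else 0)"])
qed

lemma col_indep:
  fixes V :: "'d::{finite,linorder} mt"
  assumes "invertible V"
  shows "column k V \<notin> span ((\<lambda>j. column j V) ` {j. j < k})"
proof
  assume "column k V \<in> span ((\<lambda>j. column j V) ` {j. j < k})"
  then obtain c where c: "column k V = (\<Sum>j\<in>{j. j < k}. c j *\<^sub>R column j V)"
    using span_image_repr[of "column k V" "\<lambda>j. column j V" "{j. j<k}"] by auto
  define c' where "c' i = (if i < k then c i else if i = k then -1 else 0)" for i
  have "(\<Sum>i\<in>UNIV. c' i *s column i V) = (\<Sum>i\<in>UNIV. (if i \<in> {j. j < k} then c i *\<^sub>R column i V else 0) + (if i = k then - column k V else 0))"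
    by (intro sum.cong refl) (auto simp: c'_def scalar_mult_eq_scaleR)
  also have "\<dots> = (\<Sum>j\<in>{j. j < k}. c j *\<^sub>R column j V) - column k V"
    by (simp add: sum.distrib sum.If_cases)
  also have "\<dots> = 0" using c by simp
  finally have "(\<Sum>i\<in>UNIV. c' i *s column i V) = 0" .
  moreover have "\<exists>B. B ** V = mat 1" using assms invertible_left_inverse by blast
  ultimately have "c' k = 0"
    using matrix_left_invertible_independent_columns[of V] by blast
  then show False by (simp add: c'_def)
qed

lemma gs_step:
  fixes V :: "'d::{finite,linorder} mt"
  assumes "invertible V"
  shows "\<exists>u. norm u = 1 \<and> u \<in> span ((\<lambda>j. column j V) ` {j. j \<le> k}) \<and>
     (\<forall>w\<in>span ((\<lambda>j. column j V) ` {j. j < k}). orthogonal u w)"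
proof -
  let ?S = "(\<lambda>j. column j V) ` {j. j < k}"
  let ?T = "(\<lambda>j. column j V) ` {j. j \<le> k}"
  obtain y z where yz: "y \<in> span ?S" "\<And>w. w \<in> span ?S \<Longrightarrow> orthogonal z w" "column k V = y + z"
    using orthogonal_subspace_decomp_exists by metis
  have z0: "z \<noteq> 0" using yz(1,3) col_indep[OF assms, of k] by auto
  have ST: "span ?S \<subseteq> span ?T" by (intro span_mono) auto
  have "z = column k V - y" using yz(3) by simp
  moreover have "column k V \<in> span ?T" by (intro span_base) auto
  ultimately have zT: "z \<in> span ?T" using yz(1) ST by (auto intro: span_diff)
  define u where "u = (1 / norm z) *\<^sub>R z"
  have "norm u = 1" using z0 by (simp add: u_def)
  moreover have "u \<in> span ?T" using zT by (simp add: u_def span_mul)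
  moreover have "\<forall>w\<in>span ?S. orthogonal u w"
    using yz(2) by (simp add: u_def orthogonal_clauses)
  ultimately show ?thesis by blast
qed

lemma span_invariant:
  fixes M :: "real^'n^'n"
  assumes "\<And>l. l \<in> S \<Longrightarrow> M *v v l = c l *\<^sub>R v l"
    and "w \<in> span (v ` S)"
  shows "M *v w \<in> span (v ` S)"
  using assms(2)
proof (induction rule: span_induct_alt)
  case base then show ?case by (simp add: span_zero)
next
  case (step a x y)
  then obtain l where l: "l \<in> S" "x = v l" by auto
  have "M *v (a *\<^sub>R x + y) = (a * c l) *\<^sub>R v l + M *v y"
    using assms(1)[OF l(1)] l(2) by (simp add: matrix_vector_right_distrib scalar_mult_eq_scaleR matrix_vector_mult_scaleR)
  moreover have "(a * c l) *\<^sub>R v l \<in> span (v ` S)" using l by (intro span_mul span_base) auto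
  ultimately show ?case using step by (simp add: span_add scalar_mult_eq_scaleR)
qed

lemma exists_exact:
  fixes V :: "'d::{finite,linorder} mt"
  assumes "invertible V"
  shows "\<exists>U0. orthogonal_matrix U0 \<and> (\<forall>n. low (transpose U0 ** (V ** mdiag (Lam n) ** matrix_inv V) ** U0) = 0)"
proof -
  let ?v = "\<lambda>j. column j V"
  have "\<forall>k. \<exists>u. norm u = 1 \<and> u \<in> span (?v ` {j. j \<le> k}) \<and> (\<forall>w\<in>span (?v ` {j. j < k}). orthogonal u w)"
    using gs_step[OF assms] by blast
  then obtain u where u: "\<And>k. norm (u k) = 1" "\<And>k. u k \<in> span (?v ` {j. j \<le> k})"
    "\<And>k w. w \<in> span (?v ` {j. j < k}) \<Longrightarrow> orthogonal (u k) w"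
    by metis
  define U0 where "U0 = (\<chi> i k. u k $ i)"
  have colU: "column k U0 = u k" for k by (simp add: U0_def column_def vec_eq_iff)
  have sub: "span (?v ` {l. l \<le> j}) \<subseteq> span (?v ` {l. l < i})" if "j < i" for i j
    using that by (intro span_mono) auto
  have orth: "orthogonal (u i) (u j)" if "j < i" for i j
    using u(3)[of "u j" i] u(2)[of j] sub[OF that] by auto
  have "orthogonal_matrix U0"
    unfolding orthogonal_matrix_orthonormal_columns colU
  proof (intro conjI allI impI)
    fix i j :: 'd assume "i \<noteq> j"
    then show "orthogonal (u i) (u j)"
      by (metis orth orthogonal_commute neqE)
  qed (use u(1) in auto)
  moreover have "low (transpose U0 ** (V ** mdiag (Lam n) ** matrix_inv V) ** U0) = 0" for n
  proof -
    let ?M = "V ** mdiag (Lam n) ** matrix_inv V"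
    have "(transpose U0 ** ?M ** U0) $ i $ j = 0" if "j < i" for i j
    proof -
      have "?M *v u j \<in> span (?v ` {l. l \<le> j})"
        by (rule span_invariant[where c = "Lam n"]) (use eig_col[OF assms] u(2) in auto)
      then have "orthogonal (u i) (?M *v u j)" using u(3)[of _ i] sub[OF that] by auto
      then show ?thesis by (simp add: entry_formula colU orthogonal_def)
    qed
    then show ?thesis by (simp add: low_eq0_iff)
  qed
  ultimately show ?thesis by blast
qed



declare transpose_matrix_vector[simp del]

section \<open>singular values\<close>

lemma sigma_max_bound: "norm ((A::'d::{finite,linorder} mt) *v x) \<le> sigma_max A * norm x"
proof (cases "x = 0")
  case True then show ?thesis by simp
next
  case False
  define y where "y = (1 / norm x) *\<^sub>R x"
  have y1: "norm y = 1" using False by (simp add: y_def)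
  have "norm (A *v z) \<le> norm A" if "norm z = 1" for z using mv_bound[of A z] that by simp
  then have bdd: "bdd_above ((\<lambda>x. norm (A *v x)) ` {x. norm x = 1})"
    by (intro bdd_aboveI2[where M="norm A"]) auto
  have "norm (A *v y) \<le> sigma_max A"
    unfolding sigma_max_def by (rule cSUP_upper) (use y1 bdd in auto)
  moreover have "norm (A *v y) = norm (A *v x) / norm x"
    by (simp add: y_def matrix_vector_mult_scaleR)
  ultimately show ?thesis using False by (simp add: divide_le_eq mult.commute)
qed

lemma sigma_min_bound: "sigma_min (A::'d::{finite,linorder} mt) * norm x \<le> norm (A *v x)"
proof (cases "x = 0")
  case True then show ?thesis by simp
next
  case False
  define y where "y = (1 / norm x) *\<^sub>R x"
  have y1: "norm y = 1" using False by (simp add: y_def)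
  have bdd: "bdd_below ((\<lambda>x. norm (A *v x)) ` {x. norm x = 1})"
    by (rule bdd_belowI[where m=0]) auto
  have "sigma_min A \<le> norm (A *v y)"
    unfolding sigma_min_def by (rule cINF_lower) (use y1 bdd in auto)
  moreover have "norm (A *v y) = norm (A *v x) / norm x"
    by (simp add: y_def matrix_vector_mult_scaleR)
  ultimately show ?thesis using False by (simp add: le_divide_eq)
qed

lemma sigma_le: "sigma_min (A::'d::{finite,linorder} mt) \<le> sigma_max A"
  using sigma_min_bound[of A "axis undefined 1"] sigma_max_bound[of A "axis undefined 1"] by simp

lemma sigma_min_pos:
  assumes "invertible (A::'d::{finite,linorder} mt)"
  shows "sigma_min A > 0"
proof -
  let ?B = "matrix_inv A"
  have BA: "?B ** A = mat 1" using inv_props[OF assms] by simp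
  have "?B \<noteq> 0"
  proof
    assume "?B = 0"
    then have "(mat 1 :: 'd mt) = 0" using BA by simp
    then have "(mat 1 :: 'd mt) $ undefined $ undefined = 0" by simp
    then show False by (simp add: mat_def)
  qed
  then have nB: "norm ?B > 0" by simp
  have "1 / norm ?B \<le> sigma_min A"
    unfolding sigma_min_def
  proof (rule cINF_greatest)
    show "{x::(real,'d) vec. norm x = 1} \<noteq> {}" using norm_axis_1 by blast
  next
    fix x :: "(real,'d) vec" assume "x \<in> {x. norm x = 1}"
    then have "norm x = 1" by simp
    moreover have "x = ?B *v (A *v x)" using BA by (simp add: matrix_vector_mul_assoc)
    ultimately have "1 \<le> norm ?B * norm (A *v x)" using mv_bound[of ?B "A *v x"] by simp
    then show "1 / norm ?B \<le> norm (A *v x)" using nB by (simp add: divide_le_eq mult.commute)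
  qed
  moreover have "1 / norm ?B > 0" using nB by simp
  ultimately show ?thesis by linarith
qed

section \<open>structure of exact triangularizers\<close>

lemma lastnz:
  assumes "low T = 0" "\<And>i. p < i \<Longrightarrow> s$i = 0"
  shows "(T *v s)$p = T$p$p * s$p"
proof -
  have "(T *v s)$p = (\<Sum>k\<in>UNIV. T$p$k * s$k)" by (simp add: matrix_vector_mult_def)
  also have "\<dots> = (\<Sum>k\<in>UNIV. if k = p then T$p$p * s$p else 0)"
  proof (intro sum.cong refl)
    fix k
    show "T$p$k * s$k = (if k = p then T$p$p * s$p else 0)"
    proof (cases "k < p")
      case True then have "T$p$k = 0" using assms(1) unfolding low_eq0_iff by simp
      then show ?thesis using True by simp
    next
      case False
      then show ?thesis using assms(2)[of k] by (cases "k = p") auto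
    qed
  qed
  also have "\<dots> = T$p$p * s$p" by simp
  finally show ?thesis .
qed

definition lastnz_idx :: "(real,'d::{finite,linorder}) vec \<Rightarrow> 'd" where
  "lastnz_idx s = Max {i. s$i \<noteq> 0}"

lemma lastnz_idx:
  assumes "s \<noteq> 0"
  shows "s $ lastnz_idx s \<noteq> 0" "\<And>i. lastnz_idx s < i \<Longrightarrow> s$i = 0"
proof -
  have ne: "{i. s$i \<noteq> 0} \<noteq> {}" using assms by (auto simp: vec_eq_iff)
  show "s $ lastnz_idx s \<noteq> 0" using Max_in[OF finite ne] by (simp add: lastnz_idx_def)
  show "s$i = 0" if "lastnz_idx s < i" for i
  proof (rule ccontr)
    assume "s$i \<noteq> 0"
    then have "i \<le> lastnz_idx s" unfolding lastnz_idx_def by (intro Max_ge) auto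
    then show False using that by simp
  qed
qed

lemma upper_inverse:
  fixes R Ri :: "'d::{finite,linorder} mt"
  assumes "R ** Ri = mat 1" "low R = 0" "\<And>k. R$k$k \<noteq> 0"
  shows "low Ri = 0"
proof (rule ccontr)
  assume "low Ri \<noteq> 0"
  then obtain i k where ik: "k < i" "Ri$i$k \<noteq> 0" unfolding low_eq0_iff by auto
  define c where "c = column k Ri"
  have cm: "column k (mat 1 :: 'd mt) = axis k 1" by (auto simp: column_def mat_def axis_def vec_eq_iff)
  have Rc: "R *v c = axis k 1"
    using assms(1) column_mult[of k R Ri] cm by (simp add: c_def)
  have c0: "c \<noteq> 0" using ik by (auto simp: c_def column_def vec_eq_iff)
  let ?P = "lastnz_idx c"
  have "i \<le> ?P" using lastnz_idx(2)[OF c0, of i] ik by (force simp: c_def column_def)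
  then have kP: "k < ?P" using ik by simp
  have "(R *v c) $ ?P = R$?P$?P * c$?P" by (rule lastnz[OF assms(2) lastnz_idx(2)[OF c0]])
  moreover have "?P \<noteq> k" using kP by simp
  ultimately have "R$?P$?P * c$?P = 0" using Rc by (simp add: axis_def)
  moreover have "R$?P$?P \<noteq> 0" using assms(3) by simp
  ultimately show False using lastnz_idx(1)[OF c0] by simp
qed

lemma jt_structure:
  fixes V U0 :: "'d::{finite,linorder} mt" and Lam :: "nat \<Rightarrow> 'd \<Rightarrow> real"
  assumes V_inv: "invertible V"
    and nondeg: "\<And>i i'. i \<noteq> i' \<Longrightarrow> \<exists>n\<in>{1..N}. Lam n i \<noteq> Lam n i'"
    and orth: "orthogonal_matrix U0"
    and tri: "\<And>n. n \<in> {1..N} \<Longrightarrow> low (transpose U0 ** (V ** mdiag (Lam n) ** matrix_inv V) ** U0) = 0"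
  obtains R Ri q where "R ** Ri = mat 1" "Ri ** R = mat 1" "low R = 0" "low Ri = 0" "inj q"
    "\<And>x. norm (R *v x) \<le> sigma_max V * norm x" "\<And>x. sigma_min V * norm x \<le> norm (R *v x)"
    "\<And>n. n \<in> {1..N} \<Longrightarrow> (transpose U0 ** (V ** mdiag (Lam n) ** matrix_inv V) ** U0) ** R = R ** mdiag (\<lambda>k. Lam n (q k))"
proof -
  define T where "T n = transpose U0 ** (V ** mdiag (Lam n) ** matrix_inv V) ** U0" for n
  define s where "s j = transpose U0 *v column j V" for j
  have UUt: "U0 ** transpose U0 = mat 1" using orth by (simp add: orthogonal_matrix_def)
  have TtU: "T n ** transpose U0 = transpose U0 ** (V ** mdiag (Lam n) ** matrix_inv V)" for n
  proof -
    have "T n ** transpose U0 = transpose U0 ** (V ** mdiag (Lam n) ** matrix_inv V) ** (U0 ** transpose U0)"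
      by (simp add: T_def matrix_mul_assoc)
    then show ?thesis using UUt by simp
  qed
  have eig: "T n *v s j = Lam n j *\<^sub>R s j" for n j
  proof -
    have "T n *v s j = (T n ** transpose U0) *v column j V" by (simp add: s_def matrix_vector_mul_assoc)
    also have "\<dots> = transpose U0 *v ((V ** mdiag (Lam n) ** matrix_inv V) *v column j V)"
      by (simp add: TtU matrix_vector_mul_assoc)
    also have "\<dots> = Lam n j *\<^sub>R s j"
      by (simp add: eig_col[OF V_inv] s_def matrix_vector_mult_scaleR)
    finally show ?thesis .
  qed
  have s_nz: "s j \<noteq> 0" for j
  proof -
    have "norm (s j) = norm (column j V)"
      unfolding s_def by (rule orth_norm) (simp add: orth)
    then show ?thesis using col_nonzero[OF V_inv, of j] by auto
  qed
  define p where "p j = lastnz_idx (s j)" for j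
  have p_nz: "s j $ p j \<noteq> 0" for j using lastnz_idx(1)[OF s_nz] by (simp add: p_def)
  have p_last: "\<And>i. p j < i \<Longrightarrow> s j $ i = 0" for j using lastnz_idx(2)[OF s_nz] by (simp add: p_def)
  have Tpp: "T n $ p j $ p j = Lam n j" if "n \<in> {1..N}" for n j
  proof -
    have "(T n *v s j) $ p j = T n $ p j $ p j * s j $ p j"
      by (rule lastnz[OF _ p_last]) (use tri[OF that] in \<open>simp add: T_def\<close>)
    moreover have "(T n *v s j) $ p j = Lam n j * s j $ p j" by (simp add: eig)
    ultimately show ?thesis using p_nz[of j] by simp
  qed
  have injp: "inj p"
  proof (rule injI, rule ccontr)
    fix j j' assume "p j = p j'" "j \<noteq> j'"
    then obtain n where "n \<in> {1..N}" "Lam n j \<noteq> Lam n j'" using nondeg by blast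
    then show False using Tpp[of n j] Tpp[of n j'] \<open>p j = p j'\<close> by simp
  qed
  have surjp: "surj p" by (rule finite_UNIV_inj_surj[OF _ injp]) simp
  define q where "q = inv p"
  have pq: "p (q k) = k" for k using surjp by (simp add: q_def surj_f_inv_f)
  have qp: "q (p j) = j" for j using injp by (simp add: q_def)
  have injq: "inj q" by (metis injI pq)
  define S where "S = transpose U0 ** V"
  have S_ij: "S$i$j = s j $ i" for i j
  proof -
    have "column j S = s j" by (simp add: S_def s_def column_mult)
    then show ?thesis by (metis column_def vec_lambda_beta)
  qed
  define P :: "'d mt" where "P = (\<chi> j k. if p j = k then 1 else 0)"
  define R where "R = S ** P"
  have R_ik: "R$i$k = s (q k) $ i" for i k
  proof -
    have "R$i$k = (\<Sum>j\<in>UNIV. S$i$j * (if p j = k then 1 else 0))" by (simp add: R_def P_def matrix_matrix_mult_def)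
    also have "\<dots> = (\<Sum>j\<in>UNIV. if j = q k then S$i$(q k) else 0)"
      by (intro sum.cong refl) (auto simp: pq qp)
    also have "\<dots> = s (q k) $ i" by (simp add: S_ij)
    finally show ?thesis .
  qed
  have Px: "P *v x = (\<chi> j. x $ p j)" for x
  proof -
    have "(P *v x) $ j = x $ p j" for j
    proof -
      have "(P *v x) $ j = (\<Sum>k\<in>UNIV. (if p j = k then 1 else 0) * x$k)" by (simp add: P_def matrix_vector_mult_def)
      also have "\<dots> = (\<Sum>k\<in>UNIV. if k = p j then x $ p j else 0)" by (intro sum.cong refl) auto
      finally show ?thesis by simp
    qed
    then show ?thesis by (simp add: vec_eq_iff)
  qed
  have nPx: "norm (P *v x) = norm x" for x
  proof -
    have "(norm (P *v x))\<^sup>2 = (\<Sum>j\<in>UNIV. (x $ p j)\<^sup>2)"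
      unfolding power2_norm_eq_inner by (simp add: Px inner_vec_def power2_eq_square)
    also have "\<dots> = (\<Sum>k\<in>p ` UNIV. (x $ k)\<^sup>2)" by (simp add: sum.reindex[OF injp])
    also have "\<dots> = (norm x)\<^sup>2" unfolding power2_norm_eq_inner using surjp
      by (simp add: inner_vec_def power2_eq_square)
    finally show ?thesis by (simp add: power2_eq_iff_nonneg)
  qed
  have nSy: "norm (S *v y) = norm (V *v y)" for y
    unfolding S_def matrix_vector_mul_assoc[symmetric] by (rule orth_norm) (simp add: orth)
  have Rx: "norm (R *v x) = norm (V *v (P *v x))" for x
    by (simp add: R_def matrix_vector_mul_assoc[symmetric] nSy)
  have up: "norm (R *v x) \<le> sigma_max V * norm x" for x
    using sigma_max_bound[of V "P *v x"] by (simp only: Rx nPx)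
  have lo: "sigma_min V * norm x \<le> norm (R *v x)" for x
    using sigma_min_bound[of V "P *v x"] by (simp only: Rx nPx)
  have lowR: "low R = 0"
    unfolding low_eq0_iff R_ik
  proof (intro allI impI)
    fix i k :: 'd assume "k < i"
    then have "p (q k) < i" by (simp add: pq)
    then show "s (q k) $ i = 0" by (rule p_last)
  qed
  have diagR: "R$k$k \<noteq> 0" for k using p_nz[of "q k"] by (simp add: R_ik pq)
  have "\<exists>B. B ** R = mat 1"
    unfolding matrix_left_invertible_ker
  proof (intro allI impI)
    fix x assume "R *v x = 0"
    then have "sigma_min V * norm x \<le> 0" using lo[of x] by simp
    moreover have "sigma_min V > 0" by (rule sigma_min_pos[OF V_inv])
    ultimately show "x = 0" by (simp add: mult_le_0_iff)
  qed
  then have Rinv: "invertible R" by (simp add: invertible_left_inverse)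
  define Ri where "Ri = matrix_inv R"
  have RRi: "R ** Ri = mat 1" "Ri ** R = mat 1" using inv_props[OF Rinv] by (auto simp: Ri_def)
  have lowRi: "low Ri = 0" by (rule upper_inverse[OF RRi(1) lowR diagR])
  have TR: "T n ** R = R ** mdiag (\<lambda>k. Lam n (q k))" for n
  proof -
    have colR: "column k R = s (q k)" for k by (simp add: column_def R_ik vec_eq_iff)
    have "(T n ** R)$i$k = (R ** mdiag (\<lambda>k. Lam n (q k)))$i$k" for i k
    proof -
      have "(T n ** R)$i$k = (column k (T n ** R))$i" by (simp add: column_def)
      also have "\<dots> = Lam n (q k) * s (q k) $ i" by (simp add: column_mult colR eig)
      finally show ?thesis by (simp add: mdiag_right R_ik)
    qed
    then show ?thesis by (simp add: vec_eq_iff)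
  qed
  show ?thesis
    by (rule that[OF RRi lowR lowRi injq up lo]) (use TR in \<open>simp add: T_def\<close>)
qed



lemma sum3_swap: "(\<Sum>n\<in>I. \<Sum>i\<in>A. \<Sum>j\<in>B. F n i j) = (\<Sum>i\<in>A. \<Sum>j\<in>B. \<Sum>n\<in>I. (F n i j :: real))"
proof -
  have "(\<Sum>n\<in>I. \<Sum>i\<in>A. \<Sum>j\<in>B. F n i j) = (\<Sum>i\<in>A. \<Sum>n\<in>I. \<Sum>j\<in>B. F n i j)" by (rule sum.swap)
  also have "\<dots> = (\<Sum>i\<in>A. \<Sum>j\<in>B. \<Sum>n\<in>I. F n i j)" by (intro sum.cong refl) (rule sum.swap)
  finally show ?thesis .
qed

lemma hbound:
  fixes R Ri X :: "'d::{finite,linorder} mt" and T :: "nat \<Rightarrow> 'd mt" and d :: "nat \<Rightarrow> 'd \<Rightarrow> real"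
  assumes RRi: "R ** Ri = mat 1" "Ri ** R = mat 1" and lowR: "low R = 0" "low Ri = 0"
    and bR: "\<And>x. norm (R *v x) \<le> a * norm x" and bRi: "\<And>x. norm (Ri *v x) \<le> b * norm x"
    and ab: "a \<ge> 0" "b \<ge> 0"
    and TR: "\<And>n. n \<in> I \<Longrightarrow> T n ** R = R ** mdiag (d n)"
    and gap: "\<And>i j. i \<noteq> j \<Longrightarrow> g \<le> (\<Sum>n\<in>I. (d n i - d n j)\<^sup>2)" and g0: "g \<ge> 0"
    and skew: "transpose X = - X" and nX: "norm X = 1"
  shows "g / 2 \<le> (a * b)^4 * (\<Sum>n\<in>I. (norm (low (T n ** X - X ** T n)))\<^sup>2)"
proof -
  define Z where "Z = Ri ** X ** R"
  have XZ: "X = R ** Z ** Ri"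
  proof -
    have "R ** Z ** Ri = (R ** Ri) ** X ** (R ** Ri)" by (simp add: Z_def matrix_mul_assoc)
    then show ?thesis using RRi by simp
  qed
  have lowX: "low X = low (R ** low Z ** Ri)"
  proof -
    have "X = R ** low Z ** Ri + R ** (Z - low Z) ** Ri"
      by (simp add: XZ mm_simps)
    moreover have "low (R ** (Z - low Z) ** Ri) = 0"
      by (intro upper_mult lowR low_sub_low)
    ultimately show ?thesis by (metis add.right_neutral low_add)
  qed
  have nlX: "norm (low X) \<le> a * b * norm (low Z)"
  proof -
    have "norm (low X) \<le> norm (R ** low Z ** Ri)" unfolding lowX by (rule norm_low_le)
    also have "\<dots> \<le> b * norm (R ** low Z)" by (rule mult_bound_right[OF bRi ab(2)])
    also have "\<dots> \<le> b * (a * norm (low Z))" by (intro mult_left_mono mult_bound_left[OF bR ab(1)] ab(2))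
    finally show ?thesis by (simp add: algebra_simps)
  qed
  have half: "1/2 \<le> (a * b)\<^sup>2 * (norm (low Z))\<^sup>2"
  proof -
    have "(norm X)\<^sup>2 = 2 * (norm (low X))\<^sup>2" by (rule skew_low[OF skew])
    then have "1/2 = (norm (low X))\<^sup>2" using nX by simp
    also have "\<dots> \<le> (a * b * norm (low Z))\<^sup>2" by (rule power_mono[OF nlX]) simp
    finally show ?thesis by (simp add: power_mult_distrib)
  qed
  define C where "C n = mdiag (d n) ** Z - Z ** mdiag (d n)" for n
  have conj: "low (Ri ** low (T n ** X - X ** T n) ** R) = low (C n)" if "n \<in> I" for n
  proof -
    let ?Y = "T n ** X - X ** T n"
    have RiT: "Ri ** T n = mdiag (d n) ** Ri"
    proof -
      have "Ri ** T n = Ri ** (T n ** R) ** Ri" using RRi by (simp add: matrix_mul_assoc[symmetric])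
      also have "\<dots> = mdiag (d n) ** Ri" using TR[OF that] RRi by (simp add: matrix_mul_assoc)
      finally show ?thesis .
    qed
    have "Ri ** ?Y ** R = C n"
    proof -
      have "Ri ** ?Y ** R = (Ri ** T n) ** X ** R - Ri ** X ** (T n ** R)"
        by (simp add: mm_simps matrix_mul_assoc)
      also have "\<dots> = C n"
        by (simp add: RiT TR[OF that] C_def Z_def matrix_mul_assoc)
      finally show ?thesis .
    qed
    moreover have "Ri ** ?Y ** R = Ri ** low ?Y ** R + Ri ** (?Y - low ?Y) ** R"
      by (simp add: mm_simps)
    moreover have "low (Ri ** (?Y - low ?Y) ** R) = 0"
      by (intro upper_mult lowR low_sub_low)
    ultimately show ?thesis by (metis add.right_neutral low_add)
  qed
  have nC: "norm (low (C n)) \<le> a * b * norm (low (T n ** X - X ** T n))" if "n \<in> I" for n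
  proof -
    let ?L = "low (T n ** X - X ** T n)"
    have "norm (low (C n)) \<le> norm (Ri ** ?L ** R)" unfolding conj[OF that, symmetric] by (rule norm_low_le)
    also have "\<dots> \<le> a * norm (Ri ** ?L)" by (rule mult_bound_right[OF bR ab(1)])
    also have "\<dots> \<le> a * (b * norm ?L)" by (intro mult_left_mono mult_bound_left[OF bRi ab(2)] ab(1))
    finally show ?thesis by (simp add: algebra_simps)
  qed
  have Cij: "C n $ i $ j = (d n i - d n j) * Z$i$j" for n i j
    by (simp add: C_def mdiag_left mdiag_right algebra_simps)
  have gZ: "g * (norm (low Z))\<^sup>2 \<le> (\<Sum>n\<in>I. (norm (low (C n)))\<^sup>2)"
  proof -
    have "(\<Sum>n\<in>I. (norm (low (C n)))\<^sup>2) = (\<Sum>n\<in>I. \<Sum>i\<in>UNIV. \<Sum>j\<in>UNIV. (if j < i then ((d n i - d n j) * Z$i$j)\<^sup>2 else 0))"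
      by (simp only: norm_low_sq Cij)
    also have "\<dots> = (\<Sum>i\<in>UNIV. \<Sum>j\<in>UNIV. \<Sum>n\<in>I. (if j < i then ((d n i - d n j) * Z$i$j)\<^sup>2 else 0))"
      by (rule sum3_swap)
    also have "\<dots> \<ge> (\<Sum>i\<in>UNIV. \<Sum>j\<in>UNIV. g * (if j < i then (Z$i$j)\<^sup>2 else 0))"
    proof (intro sum_mono)
      fix i j :: 'd
      show "g * (if j < i then (Z$i$j)\<^sup>2 else 0) \<le> (\<Sum>n\<in>I. (if j < i then ((d n i - d n j) * Z$i$j)\<^sup>2 else 0))"
      proof (cases "j < i")
        case True
        then have "i \<noteq> j" by simp
        have "g * (Z$i$j)\<^sup>2 \<le> (\<Sum>n\<in>I. (d n i - d n j)\<^sup>2) * (Z$i$j)\<^sup>2"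
          by (rule mult_right_mono[OF gap[OF \<open>i \<noteq> j\<close>]]) simp
        also have "\<dots> = (\<Sum>n\<in>I. ((d n i - d n j) * Z$i$j)\<^sup>2)"
          by (simp add: sum_distrib_right power_mult_distrib)
        finally show ?thesis using True by simp
      qed simp
    qed
    also have "(\<Sum>i\<in>UNIV. \<Sum>j\<in>UNIV. g * (if j < i then (Z$i$j)\<^sup>2 else 0)) = g * (norm (low Z))\<^sup>2"
      by (simp add: norm_low_sq sum_distrib_left)
    finally show ?thesis .
  qed
  have "(\<Sum>n\<in>I. (norm (low (C n)))\<^sup>2) \<le> (\<Sum>n\<in>I. (a * b)\<^sup>2 * (norm (low (T n ** X - X ** T n)))\<^sup>2)"
  proof (intro sum_mono)
    fix n assume "n \<in> I"
    have "(norm (low (C n)))\<^sup>2 \<le> (a * b * norm (low (T n ** X - X ** T n)))\<^sup>2"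
      by (rule power_mono[OF nC[OF \<open>n \<in> I\<close>]]) simp
    then show "(norm (low (C n)))\<^sup>2 \<le> (a * b)\<^sup>2 * (norm (low (T n ** X - X ** T n)))\<^sup>2"
      by (simp add: power_mult_distrib)
  qed
  also have "\<dots> = (a * b)\<^sup>2 * (\<Sum>n\<in>I. (norm (low (T n ** X - X ** T n)))\<^sup>2)"
    by (simp add: sum_distrib_left)
  finally have up: "g * (norm (low Z))\<^sup>2 \<le> (a * b)\<^sup>2 * (\<Sum>n\<in>I. (norm (low (T n ** X - X ** T n)))\<^sup>2)"
    using gZ by linarith
  have "g / 2 \<le> g * ((a * b)\<^sup>2 * (norm (low Z))\<^sup>2)"
    using mult_left_mono[OF half g0] by simp
  also have "\<dots> = (a * b)\<^sup>2 * (g * (norm (low Z))\<^sup>2)" by (simp add: algebra_simps)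
  also have "\<dots> \<le> (a * b)\<^sup>2 * ((a * b)\<^sup>2 * (\<Sum>n\<in>I. (norm (low (T n ** X - X ** T n)))\<^sup>2))"
    by (rule mult_left_mono[OF up]) simp
  also have "\<dots> = (a * b)^4 * (\<Sum>n\<in>I. (norm (low (T n ** X - X ** T n)))\<^sup>2)"
    by (simp add: power_mult_distrib[symmetric] power_add[symmetric] mult.assoc[symmetric] numeral_eq_Suc)
  finally show ?thesis .
qed



lemma conj_plus:
  fixes H Y :: "'d::{finite,linorder} mt"
  shows "transpose (mat 1 + Y) ** H ** (mat 1 + Y) = H + transpose Y ** H + H ** Y + transpose Y ** H ** Y"
  by (simp add: transpose_add mm_simps algebra_simps)

lemma conj_expand:
  fixes A X :: "'d::{finite,linorder} mt"
  assumes skew: "transpose X = - X" and nX: "norm X = 1" and t1: "\<bar>t\<bar> \<le> 1"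
  shows "\<exists>Rt. transpose (mat_exp (t *\<^sub>R X)) ** A ** mat_exp (t *\<^sub>R X) = A + t *\<^sub>R (A ** X - X ** A) + Rt
     \<and> norm Rt \<le> 6 * t\<^sup>2 * norm A"
proof -
  define E where "E = mat_exp (t *\<^sub>R X) - mat 1 - t *\<^sub>R X"
  have nE: "norm E \<le> t\<^sup>2"
    using mat_exp_bound[of "t *\<^sub>R X"] nX t1 by (simp add: E_def power2_abs)
  define Y where "Y = t *\<^sub>R X + E"
  have B: "mat_exp (t *\<^sub>R X) = mat 1 + Y" by (simp add: Y_def E_def)
  have tY: "transpose Y = - (t *\<^sub>R X) + transpose E"
    by (simp add: Y_def transpose_add transpose_scalar skew)
  have nY: "norm Y \<le> 2 * \<bar>t\<bar>"
  proof -
    have "norm Y \<le> norm (t *\<^sub>R X) + norm E" unfolding Y_def by (rule norm_triangle_ineq)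
    also have "\<dots> \<le> \<bar>t\<bar> + t\<^sup>2" using nE nX by simp
    also have "t\<^sup>2 \<le> \<bar>t\<bar>"
    proof -
      have "t\<^sup>2 = \<bar>t\<bar> * \<bar>t\<bar>" by (simp add: abs_mult_self_eq power2_eq_square)
      also have "\<dots> \<le> \<bar>t\<bar>" using t1 by (intro mult_right_le_one_le) auto
      finally show ?thesis .
    qed
    finally show ?thesis by simp
  qed
  define Rt where "Rt = transpose E ** A + A ** E + transpose Y ** A ** Y"
  have eq: "transpose (mat_exp (t *\<^sub>R X)) ** A ** mat_exp (t *\<^sub>R X) = A + t *\<^sub>R (A ** X - X ** A) + Rt"
    unfolding B conj_plus tY Rt_def by (simp add: Y_def mm_simps algebra_simps)
  have "norm Rt \<le> norm (transpose E ** A) + norm (A ** E) + norm (transpose Y ** A ** Y)"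
    unfolding Rt_def by (meson norm_triangle_ineq order_trans add_mono order_refl)
  also have "\<dots> \<le> t\<^sup>2 * norm A + norm A * t\<^sup>2 + (2 * \<bar>t\<bar>) * norm A * (2 * \<bar>t\<bar>)"
  proof (intro add_mono)
    have "norm (transpose E ** A) \<le> norm E * norm A"
      using norm_mult_le[of "transpose E" A] by (simp add: norm_transpose)
    also have "\<dots> \<le> t\<^sup>2 * norm A" using nE by (rule mult_right_mono) simp
    finally show "norm (transpose E ** A) \<le> t\<^sup>2 * norm A" .
    have "norm (A ** E) \<le> norm A * norm E" by (rule norm_mult_le)
    also have "\<dots> \<le> norm A * t\<^sup>2" using nE by (rule mult_left_mono) simp
    finally show "norm (A ** E) \<le> norm A * t\<^sup>2" .
    have "norm (transpose Y ** A ** Y) \<le> norm (transpose Y ** A) * norm Y" by (rule norm_mult_le)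
    also have "\<dots> \<le> (norm Y * norm A) * norm Y"
      using norm_mult_le[of "transpose Y" A] by (simp add: norm_transpose mult_right_mono)
    also have "\<dots> \<le> (2 * \<bar>t\<bar>) * norm A * (2 * \<bar>t\<bar>)"
      using nY by (intro mult_mono) auto
    finally show "norm (transpose Y ** A ** Y) \<le> (2 * \<bar>t\<bar>) * norm A * (2 * \<bar>t\<bar>)" .
  qed
  also have "\<dots> = 6 * t\<^sup>2 * norm A"
  proof -
    have "\<bar>t\<bar> * \<bar>t\<bar> = t\<^sup>2" by (simp add: abs_mult_self_eq power2_eq_square)
    then show ?thesis by (simp add: algebra_simps)
  qed
  finally show ?thesis using eq by blast
qed

lemma quad_bound:
  fixes a c r :: "'a::real_inner"
  assumes "\<bar>t\<bar> \<le> 1" "norm r \<le> K * t\<^sup>2" "K \<ge> 0"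
  shows "\<bar>(norm (a + t *\<^sub>R c + r))\<^sup>2 - (norm a)\<^sup>2 - 2 * t * inner a c\<bar>
     \<le> ((norm c)\<^sup>2 + 2 * norm a * K + 2 * norm c * K + K\<^sup>2) * t\<^sup>2"
proof -
  have t2: "t\<^sup>2 \<le> 1" using assms(1) by (simp add: abs_square_le_1)
  have "(norm (a + t *\<^sub>R c + r))\<^sup>2 - (norm a)\<^sup>2 - 2 * t * inner a c
     = t\<^sup>2 * (norm c)\<^sup>2 + (norm r)\<^sup>2 + 2 * inner a r + 2 * t * inner c r"
    unfolding power2_norm_eq_inner
    by (simp add: inner_add_left inner_add_right inner_commute[of c a] inner_commute[of r a] inner_commute[of r c] power2_eq_square algebra_simps)
  also have "\<bar>\<dots>\<bar> \<le> t\<^sup>2 * (norm c)\<^sup>2 + (norm r)\<^sup>2 + 2 * \<bar>inner a r\<bar> + 2 * \<bar>t\<bar> * \<bar>inner c r\<bar>"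
  proof -
    have e1: "\<bar>2 * (a \<bullet> r)\<bar> = 2 * \<bar>a \<bullet> r\<bar>" by simp
    have e2: "\<bar>2 * t * (c \<bullet> r)\<bar> = 2 * \<bar>t\<bar> * \<bar>c \<bullet> r\<bar>" by (simp add: abs_mult)
    have e3: "t\<^sup>2 * (norm c)\<^sup>2 \<ge> 0" "(norm r)\<^sup>2 \<ge> 0" by simp_all
    show ?thesis using e1 e2 e3 by arith
  qed
  also have "\<dots> \<le> ((norm c)\<^sup>2 + 2 * norm a * K + 2 * norm c * K + K\<^sup>2) * t\<^sup>2"
  proof -
    have r2: "(norm r)\<^sup>2 \<le> K\<^sup>2 * t\<^sup>2"
    proof -
      have "(norm r)\<^sup>2 \<le> (K * t\<^sup>2)\<^sup>2" by (rule power_mono[OF assms(2)]) simp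
      also have "\<dots> = K\<^sup>2 * t\<^sup>2 * t\<^sup>2" by (simp add: power2_eq_square)
      also have "\<dots> \<le> K\<^sup>2 * t\<^sup>2" using t2 by (simp add: mult_left_le)
      finally show ?thesis .
    qed
    have ar: "\<bar>inner a r\<bar> \<le> norm a * (K * t\<^sup>2)"
      using Cauchy_Schwarz_ineq2[of a r] assms(2) by (meson mult_left_mono norm_ge_zero order_trans)
    have cr: "\<bar>t\<bar> * \<bar>inner c r\<bar> \<le> norm c * (K * t\<^sup>2)"
    proof -
      have "\<bar>inner c r\<bar> \<le> norm c * (K * t\<^sup>2)"
        using Cauchy_Schwarz_ineq2[of c r] assms(2) by (meson mult_left_mono norm_ge_zero order_trans)
      moreover have "norm c * (K * t\<^sup>2) \<ge> 0" using assms(3) by simp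
      ultimately show ?thesis using assms(1) by (meson abs_ge_zero mult_left_le_one_le order_trans)
    qed
    show ?thesis using r2 ar cr by (simp add: algebra_simps)
  qed
  finally show ?thesis .
qed

lemma deriv_from_bound:
  fixes f :: "real \<Rightarrow> real"
  assumes "\<And>t. \<bar>t\<bar> \<le> 1 \<Longrightarrow> \<bar>f t - f 0 - G * t\<bar> \<le> K * t\<^sup>2" "K \<ge> 0"
  shows "(f has_real_derivative G) (at 0)"
  unfolding has_field_derivative_iff LIM_eq
proof (intro allI impI)
  fix r :: real assume r: "r > 0"
  define s where "s = min 1 (r / (K + 1))"
  have s: "s > 0" using r assms(2) by (simp add: s_def)
  have "\<forall>x. x \<noteq> 0 \<and> norm (x - 0) < s \<longrightarrow> norm ((f x - f 0) / (x - 0) - G) < r"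
  proof (intro allI impI)
    fix x :: real assume x: "x \<noteq> 0 \<and> norm (x - 0) < s"
    then have x1: "\<bar>x\<bar> \<le> 1" and xs: "\<bar>x\<bar> < r / (K + 1)" by (auto simp: s_def)
    have "(f x - f 0) / x - G = (f x - f 0 - G * x) / x" using x by (simp add: field_simps)
    then have "\<bar>(f x - f 0) / x - G\<bar> = \<bar>f x - f 0 - G * x\<bar> / \<bar>x\<bar>" by simp
    also have "\<dots> \<le> K * x\<^sup>2 / \<bar>x\<bar>" using assms(1)[OF x1] by (intro divide_right_mono) auto
    also have "\<dots> = K * \<bar>x\<bar>"
    proof -
      show ?thesis using x by (simp add: divide_eq_eq power2_eq_square abs_mult_self_eq mult.assoc)
    qed
    also have "\<dots> < r"
    proof -
      have "K * \<bar>x\<bar> \<le> (K + 1) * \<bar>x\<bar>" by (simp add: mult_right_mono)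
      also have "\<dots> < (K + 1) * (r / (K + 1))" using xs assms(2) by (intro mult_strict_left_mono) auto
      also have "\<dots> = r" using assms(2) by simp
      finally show ?thesis .
    qed
    finally show "norm ((f x - f 0) / (x - 0) - G) < r" by simp
  qed
  then show "\<exists>s>0. \<forall>x. x \<noteq> 0 \<and> norm (x - 0) < s \<longrightarrow> norm ((f x - f 0) / (x - 0) - G) < r"
    using s by blast
qed



lemma term_bound:
  fixes A X :: "'d::{finite,linorder} mt"
  assumes skew: "transpose X = - X" and nX: "norm X = 1" and t1: "\<bar>t\<bar> \<le> 1"
  shows "\<bar>(norm (low (transpose (mat_exp (t *\<^sub>R X)) ** A ** mat_exp (t *\<^sub>R X))))\<^sup>2 - (norm (low A))\<^sup>2
           - t * (2 * inner (low A) (low (A ** X - X ** A)))\<bar>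
     \<le> ((norm (low (A ** X - X ** A)))\<^sup>2 + 2 * norm (low A) * (6 * norm A)
         + 2 * norm (low (A ** X - X ** A)) * (6 * norm A) + (6 * norm A)\<^sup>2) * t\<^sup>2"
proof -
  obtain Rt where eq: "transpose (mat_exp (t *\<^sub>R X)) ** A ** mat_exp (t *\<^sub>R X) = A + t *\<^sub>R (A ** X - X ** A) + Rt"
    and nR: "norm Rt \<le> 6 * t\<^sup>2 * norm A"
    using conj_expand[OF skew nX t1, of A] by blast
  have l: "low (transpose (mat_exp (t *\<^sub>R X)) ** A ** mat_exp (t *\<^sub>R X)) = low A + t *\<^sub>R low (A ** X - X ** A) + low Rt"
    unfolding eq by (simp add: low_add low_scaleR)
  have nlR: "norm (low Rt) \<le> (6 * norm A) * t\<^sup>2"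
    using norm_low_le[of Rt] nR by (simp add: algebra_simps)
  show ?thesis
    unfolding l using quad_bound[OF t1 nlR, of "low A" "low (A ** X - X ** A)"] by (simp add: algebra_simps)
qed

lemma stationary:
  fixes U X :: "'d::{finite,linorder} mt" and Mh :: "nat \<Rightarrow> 'd mt"
  assumes skew: "transpose X = - X" and nX: "norm X = 1"
    and der: "((\<lambda>t. jt_obj N Mh (U ** mat_exp (t *\<^sub>R X))) has_real_derivative 0) (at 0)"
  shows "(\<Sum>n\<in>{1..N}. inner (low (transpose U ** Mh n ** U)) (low ((transpose U ** Mh n ** U) ** X - X ** (transpose U ** Mh n ** U)))) = 0"
proof -
  define A where "A n = transpose U ** Mh n ** U" for n
  define C where "C n = A n ** X - X ** A n" for n
  define f where "f t = jt_obj N Mh (U ** mat_exp (t *\<^sub>R X))" for t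
  define G where "G = (\<Sum>n\<in>{1..N}. 2 * inner (low (A n)) (low (C n)))"
  define Kn where "Kn n = (norm (low (C n)))\<^sup>2 + 2 * norm (low (A n)) * (6 * norm (A n))
         + 2 * norm (low (C n)) * (6 * norm (A n)) + (6 * norm (A n))\<^sup>2" for n
  have fform: "f t = (\<Sum>n\<in>{1..N}. (norm (low (transpose (mat_exp (t *\<^sub>R X)) ** A n ** mat_exp (t *\<^sub>R X))))\<^sup>2)" for t
    by (simp add: f_def jt_obj_def A_def matrix_transpose_mul matrix_mul_assoc)
  have f0: "f 0 = (\<Sum>n\<in>{1..N}. (norm (low (A n)))\<^sup>2)"
    by (simp add: fform mat_exp_0)
  have bound: "\<bar>f t - f 0 - G * t\<bar> \<le> (\<Sum>n\<in>{1..N}. Kn n) * t\<^sup>2" if t1: "\<bar>t\<bar> \<le> 1" for t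
  proof -
    let ?a = "\<lambda>n. (norm (low (transpose (mat_exp (t *\<^sub>R X)) ** A n ** mat_exp (t *\<^sub>R X))))\<^sup>2"
    let ?b = "\<lambda>n. (norm (low (A n)))\<^sup>2"
    let ?c = "\<lambda>n. 2 * inner (low (A n)) (low (C n))"
    have e1: "sum ?c {1..N} * t = (\<Sum>n\<in>{1..N}. t * ?c n)"
      by (subst mult.commute) (rule sum_distrib_left)
    have e2: "(\<Sum>n\<in>{1..N}. ?a n - ?b n - t * ?c n) = sum ?a {1..N} - sum ?b {1..N} - (\<Sum>n\<in>{1..N}. t * ?c n)"
      by (simp only: sum_subtractf)
    have eq: "f t - f 0 - G * t = (\<Sum>n\<in>{1..N}. ?a n - ?b n - t * ?c n)"
      unfolding e2 e1[symmetric] by (simp only: fform[of t] f0 G_def)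
    have "\<bar>\<Sum>n\<in>{1..N}. ?a n - ?b n - t * ?c n\<bar> \<le> (\<Sum>n\<in>{1..N}. \<bar>?a n - ?b n - t * ?c n\<bar>)"
      by (rule sum_abs)
    also have "\<dots> \<le> (\<Sum>n\<in>{1..N}. Kn n * t\<^sup>2)"
      by (intro sum_mono) (unfold C_def Kn_def, rule term_bound[OF skew nX t1])
    also have "\<dots> = (\<Sum>n\<in>{1..N}. Kn n) * t\<^sup>2" by (simp add: sum_distrib_right)
    finally show ?thesis unfolding eq .
  qed
  have "(f has_real_derivative G) (at 0)"
    by (rule deriv_from_bound[OF bound]) (auto simp: Kn_def intro!: sum_nonneg)
  moreover have "f = (\<lambda>t. jt_obj N Mh (U ** mat_exp (t *\<^sub>R X)))" by (rule ext) (simp add: f_def)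
  then have "(f has_real_derivative 0) (at 0)" using der by simp
  ultimately have "G = 0" by (rule DERIV_unique)
  then show ?thesis by (simp add: G_def A_def C_def sum_distrib_left[symmetric])
qed

lemma comm_bound:
  fixes T X :: "'d::{finite,linorder} mt"
  assumes "norm X = 1"
  shows "norm (T ** X - X ** T) \<le> 2 * norm T"
proof -
  have "norm (T ** X - X ** T) \<le> norm (T ** X) + norm (X ** T)" by (rule norm_triangle_ineq4)
  also have "\<dots> \<le> norm T * norm X + norm X * norm T" by (intro add_mono norm_mult_le)
  finally show ?thesis using assms by simp
qed

lemma per_n:
  fixes T F X A :: "'d::{finite,linorder} mt"
  assumes lowT: "low T = 0" and nF: "norm F \<le> 1" and nT: "norm T \<le> m"
    and skew: "transpose X = - X" and nX: "norm X = 1"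
    and a0: "0 < \<alpha>" and s0: "0 \<le> \<sigma>" and as1: "\<alpha> + \<sigma> < 1"
    and A: "A = transpose (mat_exp (\<alpha> *\<^sub>R X)) ** (T + \<sigma> *\<^sub>R F) ** mat_exp (\<alpha> *\<^sub>R X)"
  shows "\<bar>inner (low A) (low (A ** X - X ** A)) - \<alpha> * (norm (low (T ** X - X ** T)))\<^sup>2
           - \<sigma> * inner (low F) (low (T ** X - X ** T))\<bar>
         \<le> (2 * m * (6 * m + 8) + 2 * (8 * m + 9)\<^sup>2) * (\<alpha> + \<sigma>)\<^sup>2"
proof -
  define e where "e = \<alpha> + \<sigma>"
  define c1 where "c1 = 6 * m + 8"
  define c4 where "c4 = 8 * m + 9"
  have m0: "m \<ge> 0" using norm_ge_zero[of T] nT by linarith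
  have e0: "0 < e" "e < 1" using a0 s0 as1 by (auto simp: e_def)
  have ae: "\<alpha> \<le> e" "\<sigma> \<le> e" using a0 s0 by (auto simp: e_def)
  have e2e: "e\<^sup>2 \<le> e" using e0 by (simp add: power2_eq_square mult_left_le_one_le)
  have as_e: "\<alpha> * \<sigma> \<le> e\<^sup>2" using a0 s0 by (simp add: e_def power2_eq_square algebra_simps)
  have aa_e: "\<alpha>\<^sup>2 \<le> e\<^sup>2" using a0 s0 by (simp add: e_def power2_eq_square algebra_simps)
  define CT where "CT = T ** X - X ** T"
  define CF where "CF = F ** X - X ** F"
  define L where "L = low CT"
  have nCT: "norm CT \<le> 2 * m" using comm_bound[OF nX, of T] nT by (simp add: CT_def)
  have nCF: "norm CF \<le> 2" using comm_bound[OF nX, of F] nF by (simp add: CF_def)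
  have nL: "norm L \<le> 2 * m" using norm_low_le[of CT] nCT by (simp add: L_def)
  define H where "H = T + \<sigma> *\<^sub>R F"
  have nH: "norm H \<le> m + 1"
  proof -
    have "norm H \<le> norm T + \<sigma> * norm F" unfolding H_def using norm_triangle_ineq[of T "\<sigma> *\<^sub>R F"] s0 by simp
    also have "\<sigma> * norm F \<le> 1" using mult_left_mono[OF nF s0] ae e0 by simp
    finally show ?thesis using nT by simp
  qed
  have a1: "\<bar>\<alpha>\<bar> \<le> 1" using a0 ae e0 by simp
  obtain Ra where Aeq: "A = H + \<alpha> *\<^sub>R (H ** X - X ** H) + Ra" and nRa: "norm Ra \<le> 6 * \<alpha>\<^sup>2 * norm H"
    using conj_expand[OF skew nX a1, of H] A by (auto simp: H_def)
  have HX: "H ** X - X ** H = CT + \<sigma> *\<^sub>R CF" by (simp add: H_def CT_def CF_def mm_simps algebra_simps)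
  define \<rho> where "\<rho> = (\<alpha> * \<sigma>) *\<^sub>R CF + Ra"
  define \<Delta> where "\<Delta> = \<sigma> *\<^sub>R F + \<alpha> *\<^sub>R CT + \<rho>"
  have AD: "A = T + \<Delta>" unfolding Aeq HX by (simp add: \<Delta>_def \<rho>_def H_def algebra_simps)
  have n\<rho>: "norm \<rho> \<le> c1 * e\<^sup>2"
  proof -
    have "norm \<rho> \<le> (\<alpha> * \<sigma>) * norm CF + norm Ra"
      unfolding \<rho>_def using norm_triangle_ineq[of "(\<alpha> * \<sigma>) *\<^sub>R CF" Ra] a0 s0 by simp
    also have "\<dots> \<le> (\<alpha> * \<sigma>) * 2 + 6 * \<alpha>\<^sup>2 * (m + 1)"
    proof (rule add_mono)
      show "(\<alpha> * \<sigma>) * norm CF \<le> (\<alpha> * \<sigma>) * 2" using nCF a0 s0 by (intro mult_left_mono) auto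
      have "6 * \<alpha>\<^sup>2 * norm H \<le> 6 * \<alpha>\<^sup>2 * (m + 1)" using nH by (intro mult_left_mono) auto
      then show "norm Ra \<le> 6 * \<alpha>\<^sup>2 * (m + 1)" using nRa by linarith
    qed
    also have "\<dots> \<le> e\<^sup>2 * 2 + 6 * e\<^sup>2 * (m + 1)"
      using as_e aa_e m0 by (intro add_mono mult_right_mono mult_left_mono) auto
    finally show ?thesis by (simp add: c1_def algebra_simps)
  qed
  have n\<Delta>: "norm \<Delta> \<le> c4 * e"
  proof -
    have "norm \<Delta> \<le> norm (\<sigma> *\<^sub>R F) + norm (\<alpha> *\<^sub>R CT) + norm \<rho>"
    proof -
      have "norm \<Delta> \<le> norm (\<sigma> *\<^sub>R F + \<alpha> *\<^sub>R CT) + norm \<rho>" unfolding \<Delta>_def by (rule norm_triangle_ineq)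
      moreover have "norm (\<sigma> *\<^sub>R F + \<alpha> *\<^sub>R CT) \<le> norm (\<sigma> *\<^sub>R F) + norm (\<alpha> *\<^sub>R CT)" by (rule norm_triangle_ineq)
      ultimately show ?thesis by linarith
    qed
    also have "\<dots> \<le> e * 1 + e * (2 * m) + c1 * e"
    proof (intro add_mono)
      show "norm (\<sigma> *\<^sub>R F) \<le> e * 1" using mult_left_mono[OF nF s0] ae s0 by simp
      show "norm (\<alpha> *\<^sub>R CT) \<le> e * (2 * m)" using a0 ae nCT by (simp add: mult_mono)
      have "c1 * e\<^sup>2 \<le> c1 * e" using e2e m0 by (intro mult_left_mono) (auto simp: c1_def)
      then show "norm \<rho> \<le> c1 * e" using n\<rho> by linarith
    qed
    finally show ?thesis by (simp add: c4_def c1_def algebra_simps)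
  qed
  have lowA: "low A = \<sigma> *\<^sub>R low F + \<alpha> *\<^sub>R L + low \<rho>"
    by (simp add: AD \<Delta>_def L_def low_add low_scaleR lowT)
  have lowA': "low A = low \<Delta>" by (simp add: AD low_add lowT)
  define S where "S = low (\<Delta> ** X - X ** \<Delta>)"
  have comA: "low (A ** X - X ** A) = L + S"
    by (simp add: AD S_def L_def CT_def mm_simps low_add low_diff algebra_simps)
  have nS: "norm S \<le> 2 * norm \<Delta>" using norm_low_le[of "\<Delta> ** X - X ** \<Delta>"] comm_bound[OF nX, of \<Delta>] by (simp add: S_def)
  have expand: "inner (low A) (low (A ** X - X ** A)) = \<sigma> * inner (low F) L + \<alpha> * (norm L)\<^sup>2 + inner (low \<rho>) L + inner (low \<Delta>) S"
  proof -
    have "inner (low A) (low (A ** X - X ** A)) = inner (low A) L + inner (low \<Delta>) S"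
      by (simp add: comA inner_add_right lowA')
    also have "inner (low A) L = \<sigma> * inner (low F) L + \<alpha> * (norm L)\<^sup>2 + inner (low \<rho>) L"
      by (simp add: lowA inner_add_left power2_norm_eq_inner)
    finally show ?thesis .
  qed
  have b1: "\<bar>inner (low \<rho>) L\<bar> \<le> (2 * m * c1) * e\<^sup>2"
  proof -
    have "\<bar>inner (low \<rho>) L\<bar> \<le> norm (low \<rho>) * norm L" by (rule Cauchy_Schwarz_ineq2)
    also have "\<dots> \<le> (c1 * e\<^sup>2) * (2 * m)"
    proof (rule mult_mono)
      show "norm (low \<rho>) \<le> c1 * e\<^sup>2" using norm_low_le[of \<rho>] n\<rho> by linarith
    qed (use nL m0 in \<open>auto simp: c1_def\<close>)
    finally show ?thesis by (simp add: algebra_simps)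
  qed
  have b2: "\<bar>inner (low \<Delta>) S\<bar> \<le> (2 * c4\<^sup>2) * e\<^sup>2"
  proof -
    have "\<bar>inner (low \<Delta>) S\<bar> \<le> norm (low \<Delta>) * norm S" by (rule Cauchy_Schwarz_ineq2)
    also have "\<dots> \<le> (c4 * e) * (2 * (c4 * e))"
    proof (rule mult_mono)
      show "norm (low \<Delta>) \<le> c4 * e" using norm_low_le[of \<Delta>] n\<Delta> by linarith
      show "norm S \<le> 2 * (c4 * e)" using nS n\<Delta> by linarith
    qed (use m0 e0 in \<open>auto simp: c4_def\<close>)
    finally show ?thesis by (simp add: algebra_simps power2_eq_square)
  qed
  have key: "\<bar>inner (low A) (low (A ** X - X ** A)) - \<alpha> * (norm L)\<^sup>2 - \<sigma> * inner (low F) L\<bar>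
      \<le> (2 * m * c1 + 2 * c4\<^sup>2) * e\<^sup>2"
  proof -
    have "inner (low A) (low (A ** X - X ** A)) - \<alpha> * (norm L)\<^sup>2 - \<sigma> * inner (low F) L
        = inner (low \<rho>) L + inner (low \<Delta>) S" using expand by simp
    moreover have "\<bar>inner (low \<rho>) L + inner (low \<Delta>) S\<bar> \<le> (2 * m * c1) * e\<^sup>2 + (2 * c4\<^sup>2) * e\<^sup>2"
      using b1 b2 abs_triangle_ineq[of "inner (low \<rho>) L" "inner (low \<Delta>) S"] by linarith
    ultimately show ?thesis by (simp add: algebra_simps)
  qed
  then show ?thesis unfolding L_def CT_def e_def c1_def c4_def .
qed



lemma final_arith:
  fixes \<alpha> \<sigma> SW SL K Ce e h :: real
  assumes h: "h > 0" "SL\<^sup>2 \<ge> h" and SL0: "SL \<ge> 0" and K: "K \<ge> 0" "K\<^sup>2 * h \<ge> 1"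
    and nn: "\<sigma> \<ge> 0" "SW \<ge> 0" "Ce \<ge> 0"
    and main: "\<alpha> * SL\<^sup>2 \<le> \<sigma> * SW * SL + Ce * e\<^sup>2"
  shows "\<alpha> \<le> \<sigma> * SW * K + (Ce / h) * e\<^sup>2"
proof -
  have SLp: "SL\<^sup>2 > 0" using h by linarith
  then have SLp': "SL > 0" using SL0 by (auto simp: less_le)
  have "\<alpha> \<le> (\<sigma> * SW * SL + Ce * e\<^sup>2) / SL\<^sup>2" using main SLp by (simp add: le_divide_eq)
  also have "\<dots> = \<sigma> * SW * (1 / SL) + Ce * e\<^sup>2 / SL\<^sup>2" using SLp' by (simp add: field_simps power2_eq_square)
  also have "\<dots> \<le> \<sigma> * SW * K + (Ce / h) * e\<^sup>2"
  proof (rule add_mono)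
    have "(K * SL)\<^sup>2 \<ge> 1"
    proof -
      have "K\<^sup>2 * SL\<^sup>2 \<ge> K\<^sup>2 * h" using h by (intro mult_left_mono) auto
      then show ?thesis using K by (simp add: power_mult_distrib)
    qed
    then have "K * SL \<ge> 1" using K SL0 power2_le_imp_le[of 1 "K * SL"] by simp
    then have "1 / SL \<le> K" using SLp' by (simp add: divide_le_eq)
    then show "\<sigma> * SW * (1 / SL) \<le> \<sigma> * SW * K" using nn by (intro mult_left_mono) auto
    have "Ce * e\<^sup>2 / SL\<^sup>2 \<le> Ce * e\<^sup>2 / h" using h nn SLp by (intro divide_left_mono) auto
    then show "Ce * e\<^sup>2 / SL\<^sup>2 \<le> (Ce / h) * e\<^sup>2" by simp
  qed
  finally show ?thesis .
qed

lemma cauchy_sum: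
  fixes f g :: "nat \<Rightarrow> real"
  assumes "\<And>n. n \<in> I \<Longrightarrow> f n \<ge> 0" "\<And>n. n \<in> I \<Longrightarrow> g n \<ge> 0"
  shows "(\<Sum>n\<in>I. f n * g n) \<le> sqrt (\<Sum>n\<in>I. (f n)\<^sup>2) * sqrt (\<Sum>n\<in>I. (g n)\<^sup>2)"
proof -
  have "(\<Sum>n\<in>I. f n * g n) = (\<Sum>n\<in>I. \<bar>f n\<bar> * \<bar>g n\<bar>)" using assms by (intro sum.cong) auto
  also have "\<dots> \<le> L2_set f I * L2_set g I" by (rule L2_set_mult_ineq)
  finally show ?thesis by (simp add: L2_set_def)
qed

lemma eig_bound:
  fixes V :: "'d::{finite,linorder} mt"
  assumes "invertible V"
  shows "\<bar>d j\<bar> \<le> norm (V ** mdiag d ** matrix_inv V)"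
proof -
  let ?v = "column j V"
  have "\<bar>d j\<bar> * norm ?v = norm ((V ** mdiag d ** matrix_inv V) *v ?v)"
    by (simp add: eig_col[OF assms])
  also have "\<dots> \<le> norm (V ** mdiag d ** matrix_inv V) * norm ?v" by (rule mv_bound)
  finally show ?thesis using col_nonzero[OF assms, of j] by simp
qed

theorem lemma2:
  fixes V :: "((real,'d::{finite,linorder}) vec,'d) vec"
    and Lam :: "nat \<Rightarrow> 'd \<Rightarrow> real"
    and N :: nat
  defines "M \<equiv> (\<lambda>n. V ** mdiag (Lam n) ** matrix_inv V)"
  defines "\<gamma> \<equiv> Min {(\<Sum>n\<in>{1..N}. (Lam n i - Lam n i')\<^sup>2) | i i'. i < i'}"
  assumes V_inv: "invertible V"
    and nondeg: "\<And>i i'. i \<noteq> i' \<Longrightarrow> \<exists>n\<in>{1..N}. Lam n i \<noteq> Lam n i'"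
  shows "(\<exists>U0. exact_jt N M U0) \<and>
    (\<exists>C \<delta>. \<delta> > 0 \<and>
      (\<forall>(\<sigma>::real) (W::nat \<Rightarrow> ((real,'d) vec,'d) vec) U U0 (X::((real,'d) vec,'d) vec) (\<alpha>::real).
         \<sigma> > 0 \<longrightarrow> (\<forall>n\<in>{1..N}. norm (W n) \<le> 1) \<longrightarrow>
         approx_jt N (\<lambda>n. M n + \<sigma> *\<^sub>R W n) U \<longrightarrow>
         exact_jt N M U0 \<longrightarrow>
         transpose X = - X \<longrightarrow> norm X = 1 \<longrightarrow> \<alpha> > 0 \<longrightarrow>
         U = U0 ** mat_exp (\<alpha> *\<^sub>R X) \<longrightarrow>
         \<alpha> + \<sigma> < \<delta> \<longrightarrow>
         \<alpha> \<le> 2 * \<sigma> * sqrt (real (CARD('d) * (CARD('d) - 1))) * cond_num V ^ 4 / \<gamma>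
                * sqrt (\<Sum>n\<in>{1..N}. (norm (M n))\<^sup>2)
                * sqrt (\<Sum>n\<in>{1..N}. (norm (W n))\<^sup>2)
              + C * (\<alpha> + \<sigma>)\<^sup>2))"
proof -
  have Mn: "M n = V ** mdiag (Lam n) ** matrix_inv V" for n by (simp add: M_def)
  have part1: "\<exists>U0. exact_jt N M U0"
  proof -
    obtain U0 where "orthogonal_matrix U0" "\<forall>n. low (transpose U0 ** (V ** mdiag (Lam n) ** matrix_inv V) ** U0) = 0"
      using exists_exact[OF V_inv] by blast
    then show ?thesis unfolding exact_jt_def Mn by blast
  qed
  show ?thesis
  proof (cases "CARD('d) \<ge> 2")
    case False
    have allEq: "i = j" for i j :: 'd
    proof -
      have "card (UNIV::'d set) \<le> Suc 0" using False by simp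
      then show ?thesis using card_le_Suc0_iff_eq[of "UNIV::'d set"] by simp
    qed
    have noX: "\<not> (transpose X = - X \<and> norm X = 1)" for X :: "'d mt"
    proof
      assume a: "transpose X = - X \<and> norm X = 1"
      have "X$i$j = 0" for i j
      proof -
        have "(transpose X)$i$i = (-X)$i$i" using a by simp
        then have "X$i$i = 0" by (simp add: transpose_def)
        then show ?thesis using allEq[of i j] by simp
      qed
      then have "X = 0" by (simp add: vec_eq_iff)
      then show False using a by simp
    qed
    show ?thesis
      by (intro conjI part1 exI[of _ 0] exI[of _ 1]) (use noX in auto)
  next
    case True
    obtain i0 i1 :: 'd where i01: "i0 \<noteq> i1"
    proof -
      have "\<not> (\<forall>a1\<in>(UNIV::'d set). \<forall>a2\<in>UNIV. a1 = a2)"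
        using True card_le_Suc0_iff_eq[of "UNIV::'d set"] by simp
      then show ?thesis using that by blast
    qed
    define \<Gamma> where "\<Gamma> = {(\<Sum>n\<in>{1..N}. (Lam n i - Lam n i')\<^sup>2) | i i'. i < i'}"
    have \<gamma>\<Gamma>: "\<gamma> = Min \<Gamma>" by (simp add: \<gamma>_def \<Gamma>_def)
    have fin\<Gamma>: "finite \<Gamma>"
    proof (rule finite_subset)
      show "\<Gamma> \<subseteq> (\<lambda>(i, i'). \<Sum>n\<in>{1..N}. (Lam n i - Lam n i')\<^sup>2) ` UNIV" by (auto simp: \<Gamma>_def)
    qed simp
    have gap: "\<gamma> \<le> (\<Sum>n\<in>{1..N}. (Lam n i - Lam n i')\<^sup>2)" if "i \<noteq> i'" for i i'
    proof (cases "i < i'")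
      case True
      then have "(\<Sum>n\<in>{1..N}. (Lam n i - Lam n i')\<^sup>2) \<in> \<Gamma>" by (auto simp: \<Gamma>_def)
      then show ?thesis unfolding \<gamma>\<Gamma> by (rule Min_le[OF fin\<Gamma>])
    next
      case False
      then have "i' < i" using that by simp
      then have "(\<Sum>n\<in>{1..N}. (Lam n i' - Lam n i)\<^sup>2) \<in> \<Gamma>" by (auto simp: \<Gamma>_def)
      then have "\<gamma> \<le> (\<Sum>n\<in>{1..N}. (Lam n i' - Lam n i)\<^sup>2)" unfolding \<gamma>\<Gamma> by (rule Min_le[OF fin\<Gamma>])
      then show ?thesis by (simp add: power2_commute)
    qed
    have \<gamma>pos: "\<gamma> > 0"
    proof -
      have ne: "\<Gamma> \<noteq> {}"
      proof (cases "i0 < i1")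
        case True then show ?thesis by (auto simp: \<Gamma>_def)
      next
        case False then have "i1 < i0" using i01 by simp
        then show ?thesis by (auto simp: \<Gamma>_def)
      qed
      have "\<gamma> \<in> \<Gamma>" unfolding \<gamma>\<Gamma> by (rule Min_in[OF fin\<Gamma> ne])
      then obtain i i' where ii: "i < i'" "\<gamma> = (\<Sum>n\<in>{1..N}. (Lam n i - Lam n i')\<^sup>2)" by (auto simp: \<Gamma>_def)
      have "i \<noteq> i'" using ii(1) by simp
      then obtain n where n: "n \<in> {1..N}" "Lam n i \<noteq> Lam n i'" using nondeg[of i i'] by blast
      have "0 < (\<Sum>n\<in>{1..N}. (Lam n i - Lam n i')\<^sup>2)"
        by (rule sum_pos2[OF _ n(1)]) (use n(2) in auto)
      then show ?thesis using ii by simp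
    qed
    define \<kappa> where "\<kappa> = cond_num V"
    have smin: "sigma_min V > 0" by (rule sigma_min_pos[OF V_inv])
    have \<kappa>1: "\<kappa> \<ge> 1" using smin sigma_le[of V] by (simp add: \<kappa>_def cond_num_def)
    define m where "m = (\<Sum>n\<in>{1..N}. norm (M n))"
    have mM: "norm (M n) \<le> m" if "n \<in> {1..N}" for n
      unfolding m_def by (rule member_le_sum[OF that]) auto
    define SM where "SM = (\<Sum>n\<in>{1..N}. (norm (M n))\<^sup>2)"
    have SM0: "SM \<ge> 0" by (simp add: SM_def sum_nonneg)
    have \<gamma>4: "\<gamma> \<le> 4 * SM"
    proof -
      have "\<gamma> \<le> (\<Sum>n\<in>{1..N}. (Lam n i0 - Lam n i1)\<^sup>2)" by (rule gap[OF i01])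
      also have "\<dots> \<le> (\<Sum>n\<in>{1..N}. 4 * (norm (M n))\<^sup>2)"
      proof (rule sum_mono)
        fix n
        have b0: "\<bar>Lam n i0\<bar> \<le> norm (M n)" "\<bar>Lam n i1\<bar> \<le> norm (M n)"
          unfolding Mn by (rule eig_bound[OF V_inv])+
        have "\<bar>Lam n i0 - Lam n i1\<bar> \<le> 2 * norm (M n)" using b0 by linarith
        then have "(Lam n i0 - Lam n i1)\<^sup>2 \<le> (2 * norm (M n))\<^sup>2"
          using power_mono[of "\<bar>Lam n i0 - Lam n i1\<bar>" "2 * norm (M n)" 2] by simp
        then show "(Lam n i0 - Lam n i1)\<^sup>2 \<le> 4 * (norm (M n))\<^sup>2" by (simp add: power_mult_distrib)
      qed
      finally show ?thesis by (simp add: SM_def sum_distrib_left)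
    qed
    define dd where "dd = real (CARD('d) * (CARD('d) - 1))"
    have dd2: "dd \<ge> 2"
    proof -
      have "CARD('d) - 1 \<ge> 1" using True by simp
      then have "CARD('d) * (CARD('d) - 1) \<ge> 2 * 1" using True by (intro mult_le_mono) auto
      then show ?thesis unfolding dd_def by linarith
    qed
    define c5 where "c5 = 2 * m * (6 * m + 8) + 2 * (8 * m + 9)\<^sup>2"
    have m0: "m \<ge> 0" by (simp add: m_def sum_nonneg)
    have c50: "c5 \<ge> 0" using m0 by (simp add: c5_def)
    define hh where "hh = \<gamma> / (2 * \<kappa>^4)"
    have hh0: "hh > 0" using \<gamma>pos \<kappa>1 by (simp add: hh_def)
    define K where "K = 2 * sqrt dd * \<kappa>^4 / \<gamma> * sqrt SM"
    have K0: "K \<ge> 0" using \<gamma>pos \<kappa>1 dd2 SM0 by (simp add: K_def)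
    have Khh: "K\<^sup>2 * hh \<ge> 1"
    proof -
      have "K\<^sup>2 * hh = 2 * dd * \<kappa>^4 * SM / \<gamma>"
        using \<gamma>pos \<kappa>1 dd2 SM0
        by (simp add: K_def hh_def power_mult_distrib power_divide real_sqrt_pow2 field_simps power2_eq_square)
      moreover have "\<gamma> \<le> 2 * dd * \<kappa>^4 * SM"
      proof -
        have "\<kappa>^4 \<ge> 1" using \<kappa>1 by (simp add: one_le_power)
        then have "2 * dd * \<kappa>^4 * SM \<ge> 2 * 2 * 1 * SM"
          using dd2 SM0 by (intro mult_right_mono mult_mono) auto
        then show ?thesis using \<gamma>4 by linarith
      qed
      ultimately show ?thesis using \<gamma>pos by (simp add: le_divide_eq)
    qed
    define C where "C = (real N * c5) / hh"
    have step: "\<alpha> \<le> 2 * \<sigma> * sqrt (real (CARD('d) * (CARD('d) - 1))) * cond_num V ^ 4 / \<gamma>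
                * sqrt (\<Sum>n\<in>{1..N}. (norm (M n))\<^sup>2)
                * sqrt (\<Sum>n\<in>{1..N}. (norm (W n))\<^sup>2)
              + C * (\<alpha> + \<sigma>)\<^sup>2"
      if s0: "\<sigma> > 0" and Wb: "\<forall>n\<in>{1..N}. norm (W n) \<le> 1"
        and apx: "approx_jt N (\<lambda>n. M n + \<sigma> *\<^sub>R W n) U" and ex: "exact_jt N M U0"
        and skew: "transpose X = - X" and nX: "norm X = 1" and a0: "\<alpha> > 0"
        and Ueq: "U = U0 ** mat_exp (\<alpha> *\<^sub>R X)" and as1: "\<alpha> + \<sigma> < 1"
      for \<sigma> :: real and W :: "nat \<Rightarrow> 'd mt" and U U0 X :: "'d mt" and \<alpha> :: real
    proof -
      define e where "e = \<alpha> + \<sigma>"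
      define T where "T n = transpose U0 ** M n ** U0" for n
      define F where "F n = transpose U0 ** W n ** U0" for n
      define L where "L n = low (T n ** X - X ** T n)" for n
      define Ah where "Ah n = transpose U ** (M n + \<sigma> *\<^sub>R W n) ** U" for n
      have orth0: "orthogonal_matrix U0" and triT: "\<And>n. n \<in> {1..N} \<Longrightarrow> low (T n) = 0"
        using ex by (auto simp: exact_jt_def T_def)
      have der: "((\<lambda>t. jt_obj N (\<lambda>n. M n + \<sigma> *\<^sub>R W n) (U ** mat_exp (t *\<^sub>R X))) has_real_derivative 0) (at 0)"
        using apx skew by (simp add: approx_jt_def)
      have stat: "(\<Sum>n\<in>{1..N}. inner (low (Ah n)) (low (Ah n ** X - X ** Ah n))) = 0"
        using stationary[OF skew nX der] by (simp add: Ah_def)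
      have Aheq: "Ah n = transpose (mat_exp (\<alpha> *\<^sub>R X)) ** (T n + \<sigma> *\<^sub>R F n) ** mat_exp (\<alpha> *\<^sub>R X)" for n
        by (simp add: Ah_def Ueq T_def F_def matrix_transpose_mul mm_simps matrix_mul_assoc)
      have nT: "norm (T n) \<le> m" if "n \<in> {1..N}" for n
        using orth_conj_le[OF orth0, of "M n"] mM[OF that] by (simp add: T_def)
      have nF: "norm (F n) \<le> norm (W n)" for n
        using orth_conj_le[OF orth0, of "W n"] by (simp add: F_def)
      have pn: "\<bar>inner (low (Ah n)) (low (Ah n ** X - X ** Ah n)) - \<alpha> * (norm (L n))\<^sup>2
           - \<sigma> * inner (low (F n)) (L n)\<bar> \<le> c5 * e\<^sup>2" if "n \<in> {1..N}" for n
        unfolding L_def c5_def e_def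
      proof (rule per_n[OF triT[OF that] _ nT[OF that] skew nX a0 _ as1 Aheq])
        show "norm (F n) \<le> 1" using nF[of n] Wb that by (meson order_trans)
      qed (use s0 in auto)
      have sum1: "\<alpha> * (\<Sum>n\<in>{1..N}. (norm (L n))\<^sup>2) \<le> \<sigma> * (\<Sum>n\<in>{1..N}. norm (W n) * norm (L n)) + real N * c5 * e\<^sup>2"
      proof -
        let ?i = "\<lambda>n. inner (low (Ah n)) (low (Ah n ** X - X ** Ah n))"
        let ?P = "\<lambda>n. \<alpha> * (norm (L n))\<^sup>2 + \<sigma> * inner (low (F n)) (L n)"
        have "(\<Sum>n\<in>{1..N}. ?P n) = (\<Sum>n\<in>{1..N}. ?P n) - (\<Sum>n\<in>{1..N}. ?i n)" using stat by simp
        also have "\<dots> = (\<Sum>n\<in>{1..N}. ?P n - ?i n)" by (simp add: sum_subtractf)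
        also have "\<dots> \<le> (\<Sum>n\<in>{1..N}. c5 * e\<^sup>2)"
        proof (rule sum_mono)
          fix n assume "n \<in> {1..N}"
          then show "?P n - ?i n \<le> c5 * e\<^sup>2" using pn[of n] by linarith
        qed
        also have "\<dots> = real N * c5 * e\<^sup>2" by simp
        finally have a: "(\<Sum>n\<in>{1..N}. ?P n) \<le> real N * c5 * e\<^sup>2" .
        have b: "- (\<Sum>n\<in>{1..N}. inner (low (F n)) (L n)) \<le> (\<Sum>n\<in>{1..N}. norm (W n) * norm (L n))"
        proof -
          have "- (\<Sum>n\<in>{1..N}. inner (low (F n)) (L n)) = (\<Sum>n\<in>{1..N}. - inner (low (F n)) (L n))"
            by (simp add: sum_negf)
          also have "\<dots> \<le> (\<Sum>n\<in>{1..N}. norm (W n) * norm (L n))"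
          proof (rule sum_mono)
            fix n
            have "- inner (low (F n)) (L n) \<le> norm (low (F n)) * norm (L n)"
              using Cauchy_Schwarz_ineq2[of "low (F n)" "L n"] by linarith
            also have "\<dots> \<le> norm (W n) * norm (L n)"
              using norm_low_le[of "F n"] nF[of n] by (intro mult_right_mono) auto
            finally show "- inner (low (F n)) (L n) \<le> norm (W n) * norm (L n)" .
          qed
          finally show ?thesis .
        qed
        have "(\<Sum>n\<in>{1..N}. ?P n) = \<alpha> * (\<Sum>n\<in>{1..N}. (norm (L n))\<^sup>2) + \<sigma> * (\<Sum>n\<in>{1..N}. inner (low (F n)) (L n))"
          by (simp add: sum.distrib sum_distrib_left)
        then show ?thesis using a mult_left_mono[OF b, of \<sigma>] s0 by (simp add: algebra_simps)
      qed
      define SL where "SL = sqrt (\<Sum>n\<in>{1..N}. (norm (L n))\<^sup>2)"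
      define SW where "SW = sqrt (\<Sum>n\<in>{1..N}. (norm (W n))\<^sup>2)"
      have SL2: "SL\<^sup>2 = (\<Sum>n\<in>{1..N}. (norm (L n))\<^sup>2)" by (simp add: SL_def sum_nonneg)
      have cs: "(\<Sum>n\<in>{1..N}. norm (W n) * norm (L n)) \<le> SW * SL"
        unfolding SW_def SL_def by (rule cauchy_sum) auto
      have main: "\<alpha> * SL\<^sup>2 \<le> \<sigma> * SW * SL + (real N * c5) * e\<^sup>2"
      proof -
        have "\<sigma> * (\<Sum>n\<in>{1..N}. norm (W n) * norm (L n)) \<le> \<sigma> * (SW * SL)"
          using cs s0 by (intro mult_left_mono) auto
        then show ?thesis using sum1 unfolding SL2 by (simp add: algebra_simps)
      qed
      obtain R Ri q where RR: "R ** Ri = mat 1" "Ri ** R = mat 1" "low R = 0" "low Ri = 0" "inj q"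
        and bR: "\<And>x. norm (R *v x) \<le> sigma_max V * norm x" and lR: "\<And>x. sigma_min V * norm x \<le> norm (R *v x)"
        and TR0: "\<And>n. n \<in> {1..N} \<Longrightarrow> (transpose U0 ** (V ** mdiag (Lam n) ** matrix_inv V) ** U0) ** R = R ** mdiag (\<lambda>k. Lam n (q k))"
        using jt_structure[OF V_inv nondeg orth0 triT[unfolded T_def Mn]] by blast
      have TR: "T n ** R = R ** mdiag (\<lambda>k. Lam n (q k))" if "n \<in> {1..N}" for n
        using TR0[OF that] by (simp add: T_def Mn)
      have bRi: "norm (Ri *v x) \<le> (1 / sigma_min V) * norm x" for x
      proof -
        have "sigma_min V * norm (Ri *v x) \<le> norm (R *v (Ri *v x))" by (rule lR)
        also have "R *v (Ri *v x) = x" using RR(1) by (simp add: matrix_vector_mul_assoc)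
        finally show ?thesis using smin by (simp add: field_simps)
      qed
      have hb: "\<gamma> / 2 \<le> (sigma_max V * (1 / sigma_min V))^4 * (\<Sum>n\<in>{1..N}. (norm (low (T n ** X - X ** T n)))\<^sup>2)"
      proof (rule hbound[OF RR(1-4) bR bRi _ _ TR _ _ skew nX])
        show "0 \<le> sigma_max V" using smin sigma_le[of V] by linarith
        show "0 \<le> 1 / sigma_min V" using smin by simp
        show "0 \<le> \<gamma>" using \<gamma>pos by simp
        fix i j :: 'd assume "i \<noteq> j"
        then have "q i \<noteq> q j" using RR(5) by (auto dest: injD)
        then show "\<gamma> \<le> (\<Sum>n\<in>{1..N}. (Lam n (q i) - Lam n (q j))\<^sup>2)" by (rule gap)
      qed auto
      have SLh: "SL\<^sup>2 \<ge> hh"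
      proof -
        have k: "sigma_max V * (1 / sigma_min V) = \<kappa>" by (simp add: \<kappa>_def cond_num_def)
        have "\<gamma> / 2 \<le> \<kappa>^4 * SL\<^sup>2" using hb unfolding k SL2 L_def .
        then show ?thesis using \<kappa>1 by (simp add: hh_def field_simps)
      qed
      have fin: "\<alpha> \<le> \<sigma> * SW * K + ((real N * c5) / hh) * e\<^sup>2"
        by (rule final_arith[OF hh0 SLh _ K0 Khh _ _ _ main]) (use s0 c50 in \<open>auto simp: SL_def SW_def sum_nonneg\<close>)
      have "\<sigma> * SW * K = 2 * \<sigma> * sqrt (real (CARD('d) * (CARD('d) - 1))) * cond_num V ^ 4 / \<gamma>
                * sqrt (\<Sum>n\<in>{1..N}. (norm (M n))\<^sup>2) * sqrt (\<Sum>n\<in>{1..N}. (norm (W n))\<^sup>2)"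
        by (simp add: K_def SW_def dd_def \<kappa>_def SM_def)
      then show ?thesis using fin by (simp add: C_def e_def)
    qed
    show ?thesis
      apply (rule conjI[OF part1])
      apply (rule exI[of _ C])
      apply (rule exI[of _ 1])
      apply (intro conjI allI impI)
       apply simp
      apply (rule step)
      by assumption+
  qed
qed

end
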